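(* There exist constants $k_3,k_4$ such that for every compact $S\subseteq\mathbb{B}^{d_1d_2}=\{X:\|X\|_F\le1\}$ with non-empty interior, $$\mathbb{E}_\Omega\sup_{X,Y\in S}\|P_\Omega(X-Y)\|_2^2\le k_3\frac{|\Omega|}{d_1d_2}w_G^2(S)+k_4\Big(\sup_{X,Y\in S}\|X-Y\|_\infty\Big)w_{\Omega,g}(S).$$
   Context: $\Omega=(E_1,\dots,E_{|\Omega|})$ independent, each $E_k=e_{i_k}e_{j_k}^\top$ uniform over the standard basis matrices of $\mathbb{R}^{d_1\times d_2}$; $P_\Omega(X)=\sum_k\langle X,E_k\rangle e_k$, $P_\Omega^*$ its adjoint. $g\sim N(0,I_{|\Omega|})$ independent of $\Omega$, and $w_{\Omega,g}(S)=\mathbb{E}_{\Omega,g}\sup_{X\in S-S}\langle X,P_\Omega^*(g)\rangle$. $w_G(S)=\mathbb{E}\sup_{X\in S}\langle X,G\rangle$ with $G$ an i.i.d. standard Gaussian $d_1\times d_2$ matrix. $\|X\|_\infty=\max_{ij}|X_{ij}|$. *)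

theory Defs
  imports "HOL-Probability.Probability"
begin

text \<open>A d1 x d2 real matrix is represented as a function (nat \<times> nat) \<Rightarrow> real that
vanishes outside the index box {..<d1} \<times> {..<d2}. The space of such functions,
with the subspace topology of the product topology, is R^(d1 d2).\<close>

definition idx :: "nat \<Rightarrow> nat \<Rightarrow> (nat \<times> nat) set" where
  "idx d1 d2 = {..<d1} \<times> {..<d2}"

definition mat_space :: "nat \<Rightarrow> nat \<Rightarrow> (nat \<times> nat \<Rightarrow> real) set" where
  "mat_space d1 d2 = {X. \<forall>p. p \<notin> idx d1 d2 \<longrightarrow> X p = 0}"

definition frob_ball :: "nat \<Rightarrow> nat \<Rightarrow> (nat \<times> nat \<Rightarrow> real) set" where
  "frob_ball d1 d2 = {X \<in> mat_space d1 d2. (\<Sum>p\<in>idx d1 d2. (X p)\<^sup>2) \<le> 1}"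

definition has_nonempty_interior :: "nat \<Rightarrow> nat \<Rightarrow> (nat \<times> nat \<Rightarrow> real) set \<Rightarrow> bool" where
  "has_nonempty_interior d1 d2 S \<longleftrightarrow>
     (\<exists>U. openin (top_of_set (mat_space d1 d2)) U \<and> U \<noteq> {} \<and> U \<subseteq> S)"

text \<open>Omega = (E_1,...,E_m): m independent uniform indices; E_k = e_{i_k} e_{j_k}^T is
represented by the index pair omega k.\<close>
definition Omega_pmf :: "nat \<Rightarrow> nat \<Rightarrow> nat \<Rightarrow> (nat \<Rightarrow> nat \<times> nat) pmf" where
  "Omega_pmf d1 d2 m = pmf_of_set (PiE {..<m} (\<lambda>_. idx d1 d2))"

definition wG :: "nat \<Rightarrow> nat \<Rightarrow> (nat \<times> nat \<Rightarrow> real) set \<Rightarrow> real" where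
  "wG d1 d2 S = integral\<^sup>L (PiM (idx d1 d2) (\<lambda>_. std_normal_distribution))
      (\<lambda>G. SUP X\<in>S. \<Sum>p\<in>idx d1 d2. X p * G p)"

text \<open>w_{Omega,g}(S) = E_{Omega,g} sup_{X\<in>S-S} <X, P_Omega^*(g)>, where
<X, P_Omega^*(g)> = <P_Omega X, g> = sum_k g_k X(omega k).\<close>
definition wOg :: "nat \<Rightarrow> nat \<Rightarrow> nat \<Rightarrow> (nat \<times> nat \<Rightarrow> real) set \<Rightarrow> real" where
  "wOg d1 d2 m S = measure_pmf.expectation (Omega_pmf d1 d2 m)
      (\<lambda>\<omega>. integral\<^sup>L (PiM {..<m} (\<lambda>_. std_normal_distribution))
         (\<lambda>g. SUP (X, Y)\<in>S \<times> S. \<Sum>k<m. g k * (X (\<omega> k) - Y (\<omega> k))))"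

definition diam_inf :: "nat \<Rightarrow> nat \<Rightarrow> (nat \<times> nat \<Rightarrow> real) set \<Rightarrow> real" where
  "diam_inf d1 d2 S = (SUP (X, Y)\<in>S \<times> S. Max ((\<lambda>p. \<bar>X p - Y p\<bar>) ` idx d1 d2))"

end

theory Submission
  imports Defs
begin

lemma sum_PiE_insert:
  assumes "j \<notin> K"
  shows "(\<Sum>e\<in>PiE (insert j K) T. h e) = (\<Sum>y\<in>T j. \<Sum>g\<in>PiE K T. h (g(j:=y)))"
proof -
  have "(\<Sum>e\<in>PiE (insert j K) T. h e) = (\<Sum>e\<in>(\<lambda>(y, g). g(j := y)) ` (T j \<times> Pi\<^sub>E K T). h e)"
    by (simp add: PiE_insert_eq)
  also have "\<dots> = (\<Sum>(y,g)\<in>T j \<times> Pi\<^sub>E K T. h (g(j:=y)))"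
    by (subst sum.reindex[OF inj_combinator[OF assms]]) (simp add: case_prod_beta)
  also have "\<dots> = (\<Sum>y\<in>T j. \<Sum>g\<in>PiE K T. h (g(j:=y)))"
    by (simp add: sum.cartesian_product)
  finally show ?thesis .
qed

lemma bdd_above_bound: "(\<forall>t\<in>T. \<bar>f t\<bar> \<le> (B::real)) \<Longrightarrow> bdd_above (f ` T)"
  by (rule bdd_aboveI[of _ B]) auto

lemma two_point:
  fixes d ph a :: "'t \<Rightarrow> real"
  assumes T: "T \<noteq> {}" and bd: "\<forall>t\<in>T. \<bar>d t\<bar> \<le> D0" and ba: "\<forall>t\<in>T. \<bar>a t\<bar> \<le> B"
    and bp: "\<forall>t\<in>T. \<bar>ph t\<bar> \<le> B"
    and lip: "\<forall>t\<in>T. \<forall>s\<in>T. \<bar>ph t - ph s\<bar> \<le> L * \<bar>a t - a s\<bar>" and L: "L \<ge> 0"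
  shows "(SUP t\<in>T. d t + ph t) + (SUP t\<in>T. d t - ph t)
     \<le> (SUP t\<in>T. d t + L * a t) + (SUP t\<in>T. d t - L * a t)"
proof -
  define R where "R = (SUP t\<in>T. d t + L * a t) + (SUP t\<in>T. d t - L * a t)"
  have b1: "bdd_above ((\<lambda>t. d t + L * a t) ` T)"
    by (rule bdd_above_bound[where B="D0 + L*B"]) (use bd ba L in \<open>auto simp: abs_mult intro!: abs_triangle_ineq[THEN order_trans] add_mono mult_left_mono\<close>)
  have b2: "bdd_above ((\<lambda>t. d t - L * a t) ` T)"
    by (rule bdd_above_bound[where B="D0 + L*B"]) (use bd ba L in \<open>auto simp: abs_mult intro!: abs_triangle_ineq4[THEN order_trans] add_mono mult_left_mono\<close>)
  have key: "(d t + ph t) + (d s - ph s) \<le> R" if "t \<in> T" "s \<in> T" for t s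
  proof (cases "a t \<ge> a s")
    case True
    have "ph t - ph s \<le> L * (a t - a s)" using lip that True by (metis abs_le_D1 abs_of_nonneg diff_ge_0_iff_ge order_trans)
    moreover have "d t + L * a t \<le> (SUP t\<in>T. d t + L * a t)" by (rule cSUP_upper[OF that(1) b1])
    moreover have "d s - L * a s \<le> (SUP t\<in>T. d t - L * a t)" by (rule cSUP_upper[OF that(2) b2])
    ultimately show ?thesis unfolding R_def by (simp add: algebra_simps)
  next
    case False
    have "ph t - ph s \<le> L * (a s - a t)" using lip that False
      by (metis abs_le_D1 abs_minus_commute abs_of_nonneg diff_ge_0_iff_ge linorder_linear order_trans)
    moreover have "d s + L * a s \<le> (SUP t\<in>T. d t + L * a t)" by (rule cSUP_upper[OF that(2) b1])
    moreover have "d t - L * a t \<le> (SUP t\<in>T. d t - L * a t)" by (rule cSUP_upper[OF that(1) b2])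
    ultimately show ?thesis unfolding R_def by (simp add: algebra_simps)
  qed
  have "(SUP t\<in>T. d t + ph t) \<le> R - (d s - ph s)" if "s \<in> T" for s
    by (rule cSUP_least[OF T]) (use key that in force)
  then have "(SUP s\<in>T. d s - ph s) \<le> R - (SUP t\<in>T. d t + ph t)"
    by (intro cSUP_least[OF T]) force
  then show ?thesis unfolding R_def by simp
qed

definition signs :: "'i set \<Rightarrow> ('i \<Rightarrow> real) set" where
  "signs K = PiE K (\<lambda>_. {-1, 1})"

lemma sum_signs_insert:
  "j \<notin> K \<Longrightarrow> (\<Sum>e\<in>signs (insert j K). h e) = (\<Sum>g\<in>signs K. h (g(j:=-1)) + h (g(j:=1)))"
  unfolding signs_def by (simp add: sum_PiE_insert sum.distrib)

lemma signs_bound: "e \<in> signs K \<Longrightarrow> k \<in> K \<Longrightarrow> \<bar>e k\<bar> \<le> 1"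
  unfolding signs_def by (auto simp: PiE_def Pi_def)

lemma sum_bound_abs:
  fixes f :: "nat \<Rightarrow> real"
  assumes "\<forall>k\<in>K. \<bar>f k\<bar> \<le> B"
  shows "\<bar>\<Sum>k\<in>K. f k\<bar> \<le> real (card K) * B"
proof -
  have "\<bar>\<Sum>k\<in>K. f k\<bar> \<le> (\<Sum>k\<in>K. \<bar>f k\<bar>)" by (rule sum_abs)
  also have "\<dots> \<le> (\<Sum>k\<in>K. B)" by (rule sum_mono) (use assms in auto)
  finally show ?thesis by simp
qed

lemma contraction_gen:
  fixes a :: "'t \<Rightarrow> nat \<Rightarrow> real" and ph :: "real \<Rightarrow> real"
  assumes K: "finite K" and T: "T \<noteq> {}" and ba: "\<forall>t\<in>T. \<forall>k. \<bar>a t k\<bar> \<le> B"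
    and bp: "\<forall>t\<in>T. \<forall>k. \<bar>ph (a t k)\<bar> \<le> B"
    and lip: "\<forall>t\<in>T. \<forall>s\<in>T. \<forall>k. \<bar>ph (a t k) - ph (a s k)\<bar> \<le> L * \<bar>a t k - a s k\<bar>"
    and L: "L \<ge> 0"
  shows "\<forall>(c::'t\<Rightarrow>real) (C::real). (\<forall>t\<in>T. \<bar>c t\<bar> \<le> C) \<longrightarrow>
    (\<Sum>e\<in>signs K. SUP t\<in>T. c t + (\<Sum>k\<in>K. e k * ph (a t k)))
    \<le> (\<Sum>e\<in>signs K. SUP t\<in>T. c t + L * (\<Sum>k\<in>K. e k * a t k))"
  using K
proof (induction K rule: finite_induct)
  case empty
  then show ?case by simp
next
  case (insert j K)
  show ?case
  proof (intro allI impI)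
    fix c :: "'t \<Rightarrow> real" and C :: real assume cC: "\<forall>t\<in>T. \<bar>c t\<bar> \<le> C"
    have eqL: "(\<Sum>k\<in>insert j K. (g(j:=y)) k * ph (a t k)) = y * ph (a t j) + (\<Sum>k\<in>K. g k * ph (a t k))" for g y t
      using insert(1,2) by (simp add: sum.insert) (intro sum.cong; auto)
    have eqR: "(\<Sum>k\<in>insert j K. (g(j:=y)) k * a t k) = y * a t j + (\<Sum>k\<in>K. g k * a t k)" for g y t
      using insert(1,2) by (simp add: sum.insert) (intro sum.cong; auto)
    define P where "P = (\<lambda>y g. SUP t\<in>T. (c t + y * ph (a t j)) + (\<Sum>k\<in>K. g k * ph (a t k)))"
    define Q where "Q = (\<lambda>y g. SUP t\<in>T. (c t + y * ph (a t j)) + L * (\<Sum>k\<in>K. g k * a t k))"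
    have "(\<Sum>e\<in>signs (insert j K). SUP t\<in>T. c t + (\<Sum>k\<in>insert j K. e k * ph (a t k)))
        = (\<Sum>g\<in>signs K. P (-1) g + P 1 g)"
      unfolding sum_signs_insert[OF insert(2)] P_def eqL by (simp add: algebra_simps)
    also have "\<dots> = (\<Sum>g\<in>signs K. P (-1) g) + (\<Sum>g\<in>signs K. P 1 g)" by (simp add: sum.distrib)
    also have "\<dots> \<le> (\<Sum>g\<in>signs K. Q (-1) g) + (\<Sum>g\<in>signs K. Q 1 g)"
    proof (rule add_mono)
      have h: "\<forall>t\<in>T. \<bar>c t + y * ph (a t j)\<bar> \<le> C + B" if "\<bar>y\<bar> \<le> 1" for y :: real
      proof
        fix t assume "t \<in> T"
        have "\<bar>y * ph (a t j)\<bar> \<le> 1 * B" unfolding abs_mult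
          by (rule mult_mono) (use that bp \<open>t\<in>T\<close> in auto)
        then show "\<bar>c t + y * ph (a t j)\<bar> \<le> C + B" using cC \<open>t\<in>T\<close> by (smt (verit))
      qed
      show "(\<Sum>g\<in>signs K. P (-1) g) \<le> (\<Sum>g\<in>signs K. Q (-1) g)"
        unfolding P_def Q_def by (rule insert(3)[rule_format]) (use h[of "-1"] in auto)
      show "(\<Sum>g\<in>signs K. P 1 g) \<le> (\<Sum>g\<in>signs K. Q 1 g)"
        unfolding P_def Q_def by (rule insert(3)[rule_format]) (use h[of "1"] in auto)
    qed
    also have "\<dots> = (\<Sum>g\<in>signs K. Q (-1) g + Q 1 g)" by (simp add: sum.distrib)
    also have "\<dots> \<le> (\<Sum>g\<in>signs K. (SUP t\<in>T. c t + L * (\<Sum>k\<in>K. g k * a t k) + L * a t j)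
                     + (SUP t\<in>T. c t + L * (\<Sum>k\<in>K. g k * a t k) - L * a t j))"
    proof (rule sum_mono)
      fix g assume g: "g \<in> signs K"
      define d where "d = (\<lambda>t. c t + L * (\<Sum>k\<in>K. g k * a t k))"
      have bd: "\<forall>t\<in>T. \<bar>d t\<bar> \<le> C + L * (real (card K) * B)"
      proof
        fix t assume t: "t \<in> T"
        have "\<bar>\<Sum>k\<in>K. g k * a t k\<bar> \<le> real (card K) * B"
        proof (rule sum_bound_abs, intro ballI)
          fix k assume k: "k \<in> K"
          have "\<bar>g k\<bar> * \<bar>a t k\<bar> \<le> 1 * B"
            by (rule mult_mono) (use signs_bound[OF g k] ba t in auto)
          then show "\<bar>g k * a t k\<bar> \<le> B" by (simp add: abs_mult)
        qed
        then have "\<bar>L * (\<Sum>k\<in>K. g k * a t k)\<bar> \<le> L * (real (card K) * B)"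
          using L by (simp add: abs_mult mult_left_mono)
        then show "\<bar>d t\<bar> \<le> C + L * (real (card K) * B)" unfolding d_def using cC t by (smt (verit))
      qed
      have "(SUP t\<in>T. d t + ph (a t j)) + (SUP t\<in>T. d t - ph (a t j))
         \<le> (SUP t\<in>T. d t + L * a t j) + (SUP t\<in>T. d t - L * a t j)"
        by (rule two_point[OF T bd]) (use ba bp lip L in auto)
      moreover have "Q (-1) g = (SUP t\<in>T. d t - ph (a t j))" "Q 1 g = (SUP t\<in>T. d t + ph (a t j))"
        unfolding Q_def d_def by (simp_all add: algebra_simps)
      ultimately show "Q (-1) g + Q 1 g \<le> (SUP t\<in>T. c t + L * (\<Sum>k\<in>K. g k * a t k) + L * a t j)
                     + (SUP t\<in>T. c t + L * (\<Sum>k\<in>K. g k * a t k) - L * a t j)"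
        unfolding d_def by simp
    qed
    also have "\<dots> = (\<Sum>e\<in>signs (insert j K). SUP t\<in>T. c t + L * (\<Sum>k\<in>insert j K. e k * a t k))"
      unfolding sum_signs_insert[OF insert(2)] eqR by (simp add: algebra_simps)
    finally show "(\<Sum>e\<in>signs (insert j K). SUP t\<in>T. c t + (\<Sum>k\<in>insert j K. e k * ph (a t k)))
        \<le> (\<Sum>e\<in>signs (insert j K). SUP t\<in>T. c t + L * (\<Sum>k\<in>insert j K. e k * a t k))" .
  qed
qed

lemma sum_PiE_coord:
  fixes h :: "'p \<Rightarrow> real"
  assumes K: "finite K" and k: "k \<in> K" and I: "finite I"
  shows "real (card I) * (\<Sum>w\<in>PiE K (\<lambda>_. I). h (w k)) = real (card (PiE K (\<lambda>_. I))) * (\<Sum>p\<in>I. h p)"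
proof -
  have Kk: "K = insert k (K - {k})" using k by auto
  have "(\<Sum>w\<in>PiE K (\<lambda>_. I). h (w k)) = (\<Sum>y\<in>I. \<Sum>g\<in>PiE (K-{k}) (\<lambda>_. I). h ((g(k:=y)) k))"
    by (subst Kk, subst sum_PiE_insert) auto
  also have "\<dots> = real (card (PiE (K-{k}) (\<lambda>_. I))) * (\<Sum>p\<in>I. h p)"
    by (simp add: sum_distrib_left)
  finally have e: "(\<Sum>w\<in>PiE K (\<lambda>_. I). h (w k)) = real (card (PiE (K-{k}) (\<lambda>_. I))) * (\<Sum>p\<in>I. h p)" .
  have "card (PiE K (\<lambda>_. I)) = card I * card (PiE (K-{k}) (\<lambda>_. I))"
  proof -
    obtain n where n: "card K = Suc n" using K k by (metis card_gt_0_iff empty_iff gr0_implies_Suc)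
    show ?thesis using K k by (simp add: card_PiE n)
  qed
  then show ?thesis unfolding e by simp
qed

lemma sup_add_le:
  fixes f g :: "'t \<Rightarrow> real"
  assumes T: "T \<noteq> {}" and "bdd_above (f ` T)" "bdd_above (g ` T)"
  shows "(SUP t\<in>T. f t + g t) \<le> (SUP t\<in>T. f t) + (SUP t\<in>T. g t)"
  by (rule cSUP_least[OF T]) (intro add_mono cSUP_upper assms; simp_all)

lemma sum_bound_abs':
  fixes f :: "'a \<Rightarrow> real"
  assumes "\<forall>k\<in>K. \<bar>f k\<bar> \<le> B"
  shows "\<bar>\<Sum>k\<in>K. f k\<bar> \<le> real (card K) * B"
proof -
  have "\<bar>\<Sum>k\<in>K. f k\<bar> \<le> (\<Sum>k\<in>K. \<bar>f k\<bar>)" by (rule sum_abs)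
  also have "\<dots> \<le> (\<Sum>k\<in>K. B)" by (rule sum_mono) (use assms in auto)
  finally show ?thesis by simp
qed

lemma bdd_signsum:
  fixes f :: "'t \<Rightarrow> 'p \<Rightarrow> real"
  assumes fb: "\<forall>t\<in>T. \<forall>p. \<bar>f t p\<bar> \<le> B" and e: "\<forall>k\<in>K. \<bar>e k\<bar> \<le> 1"
  shows "bdd_above ((\<lambda>t. \<Sum>k\<in>K. e k * f t (w k)) ` T)"
proof (rule bdd_above_bound[where B="real (card K) * B"], intro ballI sum_bound_abs' ballI)
  fix t k assume t: "t \<in> T" and k: "k \<in> K"
  have "\<bar>e k\<bar> * \<bar>f t (w k)\<bar> \<le> 1 * B" by (rule mult_mono) (use e k fb t in auto)
  then show "\<bar>e k * f t (w k)\<bar> \<le> B" by (simp add: abs_mult)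
qed

lemma sum_invol:
  assumes "\<forall>x\<in>A. s x \<in> A \<and> s (s x) = x"
  shows "(\<Sum>x\<in>A. g (s x)) = (\<Sum>x\<in>A. (g x :: real))"
  by (rule sum.reindex_bij_witness[of _ s s]) (use assms in auto)

lemma signs_card_pos: "finite K \<Longrightarrow> card (signs K) > 0"
  unfolding signs_def by (simp add: card_PiE)

lemma signs_finite: "finite K \<Longrightarrow> finite (signs K)"
  unfolding signs_def by (simp add: finite_PiE)

lemma signs_vals: "e \<in> signs K \<Longrightarrow> k \<in> K \<Longrightarrow> e k = -1 \<or> e k = 1"
  unfolding signs_def by auto

lemma signs_flip:
  fixes K :: "nat set" and f :: "'t \<Rightarrow> nat \<Rightarrow> real"
  assumes "finite K"
  shows "(\<Sum>e\<in>signs K. SUP t\<in>T. \<Sum>k\<in>K. - e k * (f t k :: real)) = (\<Sum>e\<in>signs K. SUP t\<in>T. \<Sum>k\<in>K. e k * f t k)"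
proof -
  define s where "s = (\<lambda>e::nat\<Rightarrow>real. \<lambda>k. if k \<in> K then - e k else undefined)"
  have inv: "\<forall>e\<in>signs K. s e \<in> signs K \<and> s (s e) = e"
    unfolding s_def signs_def by (auto simp: PiE_def extensional_def fun_eq_iff)
  have "(\<Sum>e\<in>signs K. SUP t\<in>T. \<Sum>k\<in>K. - e k * f t k) = (\<Sum>e\<in>signs K. (\<lambda>e. SUP t\<in>T. \<Sum>k\<in>K. e k * f t k) (s e))"
    by (intro sum.cong refl SUP_cong sum.cong) (auto simp: s_def)
  also have "\<dots> = (\<Sum>e\<in>signs K. SUP t\<in>T. \<Sum>k\<in>K. e k * f t k)"
    by (rule sum_invol[OF inv])
  finally show ?thesis .
qed

lemma symmetrization:
  fixes f :: "'t \<Rightarrow> 'p \<Rightarrow> real" and K :: "nat set"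
  assumes K: "finite K" and I: "finite I" "I \<noteq> {}" and T: "T \<noteq> {}"
    and fb: "\<forall>t\<in>T. \<forall>p. \<bar>f t p\<bar> \<le> B"
  defines "\<Omega> \<equiv> PiE K (\<lambda>_. I)"
  shows "(\<Sum>w\<in>\<Omega>. SUP t\<in>T. \<Sum>k\<in>K. f t (w k))
    \<le> real (card \<Omega>) * (real (card K) * (SUP t\<in>T. (\<Sum>p\<in>I. f t p) / real (card I)))
      + (2 / real (card (signs K))) * (\<Sum>w\<in>\<Omega>. \<Sum>e\<in>signs K. SUP t\<in>T. \<Sum>k\<in>K. e k * f t (w k))"
proof -
  define N where "N = real (card \<Omega>)"
  define E where "E = real (card (signs K))"
  define \<mu> where "\<mu> = (\<lambda>t. (\<Sum>p\<in>I. f t p) / real (card I))"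
  define A where "A = (\<lambda>e w. SUP t\<in>T. \<Sum>k\<in>K. e k * f t (w k))"
  define D where "D = (\<lambda>w w'. SUP t\<in>T. \<Sum>k\<in>K. (f t (w k) - f t (w' k)))"
  have finO: "finite \<Omega>" unfolding \<Omega>_def using K I by (simp add: finite_PiE)
  have NO: "\<Omega> \<noteq> {}" unfolding \<Omega>_def using I by (simp add: PiE_eq_empty_iff)
  have Npos: "N > 0" unfolding N_def using finO NO by (simp add: card_gt_0_iff)
  have Epos: "E > 0" unfolding E_def using signs_card_pos[OF K] by simp
  have cI: "real (card I) > 0" using I by (simp add: card_gt_0_iff)
  have bmu: "\<forall>t\<in>T. \<bar>\<mu> t\<bar> \<le> B"
  proof
    fix t assume t: "t \<in> T"
    have "\<bar>\<Sum>p\<in>I. f t p\<bar> \<le> real (card I) * B" by (rule sum_bound_abs') (use fb t in auto)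
    then have "\<bar>\<Sum>p\<in>I. f t p\<bar> / real (card I) \<le> real (card I) * B / real (card I)"
      by (rule divide_right_mono) simp
    moreover have "\<bar>\<mu> t\<bar> = \<bar>\<Sum>p\<in>I. f t p\<bar> / real (card I)" unfolding \<mu>_def abs_divide by simp
    moreover have "real (card I) * B / real (card I) = B" using cI by simp
    ultimately show "\<bar>\<mu> t\<bar> \<le> B" by linarith
  qed
  have bdd_mu: "bdd_above (\<mu> ` T)" by (rule bdd_above_bound) (rule bmu)
  have bdd1: "bdd_above ((\<lambda>t. \<Sum>k\<in>K. (f t (w k) - \<mu> t)) ` T)" for w
  proof (rule bdd_above_bound[where B="real (card K) * (2*B)"], intro ballI sum_bound_abs' ballI)
    fix t k assume "t \<in> T" "k \<in> K"
    then have "\<bar>f t (w k)\<bar> \<le> B" "\<bar>\<mu> t\<bar> \<le> B" using fb bmu by auto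
    then show "\<bar>f t (w k) - \<mu> t\<bar> \<le> 2 * B" by (smt (verit))
  qed
  have bdd2: "bdd_above ((\<lambda>t. \<Sum>k\<in>K. (f t (w k) - f t (w' k))) ` T)" for w w'
  proof (rule bdd_above_bound[where B="real (card K) * (2*B)"], intro ballI sum_bound_abs' ballI)
    fix t k assume "t \<in> T" "k \<in> K"
    then have "\<bar>f t (w k)\<bar> \<le> B" "\<bar>f t (w' k)\<bar> \<le> B" using fb by auto
    then show "\<bar>f t (w k) - f t (w' k)\<bar> \<le> 2 * B" by (smt (verit))
  qed
  have S1: "(SUP t\<in>T. \<Sum>k\<in>K. f t (w k)) \<le> real (card K) * (SUP t\<in>T. \<mu> t) + (SUP t\<in>T. \<Sum>k\<in>K. (f t (w k) - \<mu> t))" for w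
  proof (rule cSUP_least[OF T])
    fix t assume t: "t \<in> T"
    have "(\<Sum>k\<in>K. f t (w k)) = (\<Sum>k\<in>K. (f t (w k) - \<mu> t)) + real (card K) * \<mu> t"
      by (simp add: sum_subtractf)
    also have "\<dots> \<le> (SUP t\<in>T. \<Sum>k\<in>K. (f t (w k) - \<mu> t)) + real (card K) * (SUP t\<in>T. \<mu> t)"
      by (intro add_mono mult_left_mono cSUP_upper t bdd1 bdd_mu) auto
    finally show "(\<Sum>k\<in>K. f t (w k)) \<le> real (card K) * (SUP t\<in>T. \<mu> t) + (SUP t\<in>T. \<Sum>k\<in>K. (f t (w k) - \<mu> t))"
      by simp
  qed
  have S2: "N * (SUP t\<in>T. \<Sum>k\<in>K. (f t (w k) - \<mu> t)) \<le> (\<Sum>w'\<in>\<Omega>. D w w')" for w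
  proof -
    have "(SUP t\<in>T. \<Sum>k\<in>K. (f t (w k) - \<mu> t)) \<le> (\<Sum>w'\<in>\<Omega>. D w w') / N"
    proof (rule cSUP_least[OF T])
      fix t assume t: "t \<in> T"
      have coord: "(\<Sum>w'\<in>\<Omega>. f t (w' k)) = N * \<mu> t" if k: "k \<in> K" for k
        using sum_PiE_coord[OF K k I(1), of "f t"] cI unfolding N_def \<mu>_def \<Omega>_def
        by (simp add: field_simps)
      have "(\<Sum>k\<in>K. \<Sum>w'\<in>\<Omega>. (f t (w k) - f t (w' k))) = (\<Sum>k\<in>K. N * f t (w k) - N * \<mu> t)"
        by (rule sum.cong[OF refl]) (simp add: sum_subtractf coord N_def)
      then have "N * (\<Sum>k\<in>K. (f t (w k) - \<mu> t)) = (\<Sum>k\<in>K. \<Sum>w'\<in>\<Omega>. (f t (w k) - f t (w' k)))"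
        by (simp add: sum_distrib_left right_diff_distrib)
      also have "\<dots> = (\<Sum>w'\<in>\<Omega>. \<Sum>k\<in>K. (f t (w k) - f t (w' k)))" by (rule sum.swap)
      also have "\<dots> \<le> (\<Sum>w'\<in>\<Omega>. D w w')" unfolding D_def
        by (intro sum_mono cSUP_upper t bdd2)
      finally show "(\<Sum>k\<in>K. (f t (w k) - \<mu> t)) \<le> (\<Sum>w'\<in>\<Omega>. D w w') / N"
        using Npos by (simp add: field_simps)
    qed
    then show ?thesis using Npos by (simp add: field_simps)
  qed
  have S34: "(\<Sum>w\<in>\<Omega>. \<Sum>w'\<in>\<Omega>. D w w') \<le> N * (\<Sum>w\<in>\<Omega>. A e w) + N * (\<Sum>w\<in>\<Omega>. A (\<lambda>k. - e k) w)"
    if e: "e \<in> signs K" for e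
  proof -
    define s where "s = (\<lambda>(w::nat\<Rightarrow>'p, w'::nat\<Rightarrow>'p). ((\<lambda>k. if e k = 1 then w k else w' k), (\<lambda>k. if e k = 1 then w' k else w k)))"
    have inv: "\<forall>x\<in>\<Omega>\<times>\<Omega>. s x \<in> \<Omega>\<times>\<Omega> \<and> s (s x) = x"
      unfolding s_def \<Omega>_def by (auto simp: PiE_def Pi_def extensional_def fun_eq_iff)
    have eqD: "D (fst (s x)) (snd (s x)) = (SUP t\<in>T. \<Sum>k\<in>K. e k * (f t (fst x k) - f t (snd x k)))" for x
      unfolding D_def s_def
      by (intro SUP_cong refl sum.cong) (auto simp: case_prod_beta dest!: signs_vals[OF e])
    have "(\<Sum>w\<in>\<Omega>. \<Sum>w'\<in>\<Omega>. D w w') = (\<Sum>x\<in>\<Omega>\<times>\<Omega>. D (fst x) (snd x))"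
      unfolding sum.cartesian_product by (rule sum.cong) auto
    also have "\<dots> = (\<Sum>x\<in>\<Omega>\<times>\<Omega>. (\<lambda>x. D (fst x) (snd x)) (s x))"
      by (rule sum_invol[OF inv, symmetric])
    also have "\<dots> = (\<Sum>x\<in>\<Omega>\<times>\<Omega>. SUP t\<in>T. \<Sum>k\<in>K. e k * (f t (fst x k) - f t (snd x k)))"
      using eqD by simp
    also have "\<dots> \<le> (\<Sum>x\<in>\<Omega>\<times>\<Omega>. A e (fst x) + A (\<lambda>k. - e k) (snd x))"
    proof (rule sum_mono)
      fix x
      have eb: "\<forall>k\<in>K. \<bar>e k\<bar> \<le> 1" "\<forall>k\<in>K. \<bar>- e k\<bar> \<le> 1" using signs_bound[OF e] by auto
      have "(SUP t\<in>T. \<Sum>k\<in>K. e k * (f t (fst x k) - f t (snd x k)))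
          = (SUP t\<in>T. (\<Sum>k\<in>K. e k * f t (fst x k)) + (\<Sum>k\<in>K. - e k * f t (snd x k)))"
        by (intro SUP_cong refl) (simp add: sum.distrib[symmetric] algebra_simps)
      also have "\<dots> \<le> A e (fst x) + A (\<lambda>k. - e k) (snd x)"
        unfolding A_def by (rule sup_add_le[OF T bdd_signsum[OF fb eb(1)] bdd_signsum[OF fb eb(2)]])
      finally show "(SUP t\<in>T. \<Sum>k\<in>K. e k * (f t (fst x k) - f t (snd x k))) \<le> A e (fst x) + A (\<lambda>k. - e k) (snd x)" .
    qed
    also have "\<dots> = N * (\<Sum>w\<in>\<Omega>. A e w) + N * (\<Sum>w\<in>\<Omega>. A (\<lambda>k. - e k) w)"
    proof -
      have "(\<Sum>x\<in>\<Omega>\<times>\<Omega>. A e (fst x) + A (\<lambda>k. - e k) (snd x)) = (\<Sum>w\<in>\<Omega>. \<Sum>w'\<in>\<Omega>. A e w + A (\<lambda>k. - e k) w')"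
        unfolding sum.cartesian_product by (rule sum.cong) auto
      also have "\<dots> = (\<Sum>w\<in>\<Omega>. N * A e w + (\<Sum>w'\<in>\<Omega>. A (\<lambda>k. - e k) w'))"
        by (simp add: sum.distrib N_def)
      also have "\<dots> = N * (\<Sum>w\<in>\<Omega>. A e w) + N * (\<Sum>w\<in>\<Omega>. A (\<lambda>k. - e k) w)"
        by (simp add: sum.distrib N_def sum_distrib_left)
      finally show ?thesis .
    qed
    finally show ?thesis .
  qed
  have "E * (\<Sum>w\<in>\<Omega>. \<Sum>w'\<in>\<Omega>. D w w') = (\<Sum>e\<in>signs K. \<Sum>w\<in>\<Omega>. \<Sum>w'\<in>\<Omega>. D w w')"
    unfolding E_def by simp
  also have "\<dots> \<le> (\<Sum>e\<in>signs K. N * (\<Sum>w\<in>\<Omega>. A e w) + N * (\<Sum>w\<in>\<Omega>. A (\<lambda>k. - e k) w))"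
    by (rule sum_mono) (rule S34)
  also have "\<dots> = N * (\<Sum>w\<in>\<Omega>. \<Sum>e\<in>signs K. A e w) + N * (\<Sum>w\<in>\<Omega>. \<Sum>e\<in>signs K. A (\<lambda>k. - e k) w)"
  proof -
    have "(\<Sum>e\<in>signs K. N * (\<Sum>w\<in>\<Omega>. A e w) + N * (\<Sum>w\<in>\<Omega>. A (\<lambda>k. - e k) w))
      = N * (\<Sum>e\<in>signs K. \<Sum>w\<in>\<Omega>. A e w) + N * (\<Sum>e\<in>signs K. \<Sum>w\<in>\<Omega>. A (\<lambda>k. - e k) w)"
      by (simp only: sum.distrib sum_distrib_left)
    also have "(\<Sum>e\<in>signs K. \<Sum>w\<in>\<Omega>. A e w) = (\<Sum>w\<in>\<Omega>. \<Sum>e\<in>signs K. A e w)" by (rule sum.swap)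
    also have "(\<Sum>e\<in>signs K. \<Sum>w\<in>\<Omega>. A (\<lambda>k. - e k) w) = (\<Sum>w\<in>\<Omega>. \<Sum>e\<in>signs K. A (\<lambda>k. - e k) w)" by (rule sum.swap)
    finally show ?thesis .
  qed
  also have "(\<Sum>w\<in>\<Omega>. \<Sum>e\<in>signs K. A (\<lambda>k. - e k) w) = (\<Sum>w\<in>\<Omega>. \<Sum>e\<in>signs K. A e w)"
    unfolding A_def by (rule sum.cong[OF refl], rule signs_flip[OF K])
  finally have DD: "E * (\<Sum>w\<in>\<Omega>. \<Sum>w'\<in>\<Omega>. D w w') \<le> 2 * N * (\<Sum>w\<in>\<Omega>. \<Sum>e\<in>signs K. A e w)" by simp
  have "(\<Sum>w\<in>\<Omega>. SUP t\<in>T. \<Sum>k\<in>K. f t (w k))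
      \<le> (\<Sum>w\<in>\<Omega>. real (card K) * (SUP t\<in>T. \<mu> t) + (SUP t\<in>T. \<Sum>k\<in>K. (f t (w k) - \<mu> t)))"
    by (rule sum_mono) (rule S1)
  also have "\<dots> = N * (real (card K) * (SUP t\<in>T. \<mu> t)) + (\<Sum>w\<in>\<Omega>. SUP t\<in>T. \<Sum>k\<in>K. (f t (w k) - \<mu> t))"
    by (simp add: sum.distrib N_def)
  also have "(\<Sum>w\<in>\<Omega>. SUP t\<in>T. \<Sum>k\<in>K. (f t (w k) - \<mu> t)) \<le> (\<Sum>w\<in>\<Omega>. \<Sum>w'\<in>\<Omega>. D w w') / N"
  proof -
    have "N * (\<Sum>w\<in>\<Omega>. SUP t\<in>T. \<Sum>k\<in>K. (f t (w k) - \<mu> t)) \<le> (\<Sum>w\<in>\<Omega>. \<Sum>w'\<in>\<Omega>. D w w')"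
      unfolding sum_distrib_left by (rule sum_mono) (rule S2)
    then show ?thesis using Npos by (simp add: field_simps)
  qed
  also have "(\<Sum>w\<in>\<Omega>. \<Sum>w'\<in>\<Omega>. D w w') / N \<le> (2 / E) * (\<Sum>w\<in>\<Omega>. \<Sum>e\<in>signs K. A e w)"
    using DD Npos Epos by (simp add: field_simps)
  finally show ?thesis unfolding N_def E_def A_def \<mu>_def by simp
qed

abbreviation GN :: "real measure" where "GN \<equiv> std_normal_distribution"

lemma prob_N: "prob_space GN"
  using real_dist_normal_dist by (simp add: real_distribution_def)

lemma sets_N[simp, measurable_cong]: "sets GN = sets borel"
  by simp

lemma space_N[simp]: "space GN = UNIV"
  by simp

lemma N_sym_neg: "distr GN GN uminus = GN"
proof -
  interpret prob_space GN by (rule prob_N)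
  have d: "distributed GN lborel (\<lambda>x. x) (\<lambda>x. ennreal (normal_density 0 1 x))"
    unfolding distributed_def
    by (auto simp: distr_id2)
  have "distributed GN lborel (\<lambda>x. 0 + (-1) * x) (\<lambda>x. ennreal (normal_density (0 + (-1) * 0) (\<bar>-1\<bar> * 1) x))"
    by (rule normal_density_affine[OF d]) auto
  then have "distr GN lborel uminus = GN"
    unfolding distributed_def by simp
  moreover have "distr GN GN uminus = distr GN lborel uminus"
    by (rule distr_cong) auto
  ultimately show ?thesis by simp
qed

lemma N_sym: assumes "s = -1 \<or> s = (1::real)" shows "distr GN GN (\<lambda>x. s * x) = GN"
  using assms
proof
  assume "s = -1" then show ?thesis using N_sym_neg by (simp add: fun_eq_iff[symmetric])
next
  assume "s = 1" then show ?thesis by (simp add: distr_id2)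
qed

lemma prod_N: "product_prob_space (\<lambda>_. GN)"
  by (intro product_prob_spaceI) (simp add: prob_N)

lemma distr_PiM_indexed:
  fixes K :: "'i set" and f :: "'i \<Rightarrow> real \<Rightarrow> real"
  assumes K: "finite K" and fm: "\<And>i. i \<in> K \<Longrightarrow> f i \<in> borel_measurable borel"
    and fd: "\<And>i. i \<in> K \<Longrightarrow> distr GN GN (f i) = GN"
  shows "distr (PiM K (\<lambda>_. GN)) (PiM K (\<lambda>_. GN)) (\<lambda>x. \<lambda>i\<in>K. f i (x i)) = PiM K (\<lambda>_. GN)"
proof -
  interpret product_prob_space "\<lambda>_. GN" by (rule prod_N)
  have fm': "f i \<in> measurable GN GN" if "i \<in> K" for i
    by (subst measurable_cong_sets[OF sets_N sets_N]) (rule fm[OF that])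
  have meas: "(\<lambda>x. \<lambda>i\<in>K. f i (x i)) \<in> measurable (PiM K (\<lambda>_. GN)) (PiM K (\<lambda>_. GN))"
  proof (rule measurable_restrict)
    fix i assume i: "i \<in> K"
    show "(\<lambda>x. f i (x i)) \<in> measurable (PiM K (\<lambda>_. GN)) GN"
      using measurable_compose[OF measurable_component_singleton[OF i] fm'[OF i]] .
  qed
  show ?thesis
  proof (rule PiM_eqI[OF K])
    show "sets (distr (PiM K (\<lambda>_. GN)) (PiM K (\<lambda>_. GN)) (\<lambda>x. \<lambda>i\<in>K. f i (x i))) = sets (PiM K (\<lambda>_. GN))"
      by simp
    fix A assume A: "\<And>i. i \<in> K \<Longrightarrow> A i \<in> sets GN"
    have "emeasure (distr (PiM K (\<lambda>_. GN)) (PiM K (\<lambda>_. GN)) (\<lambda>x. \<lambda>i\<in>K. f i (x i))) (Pi\<^sub>E K A)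
      = emeasure (PiM K (\<lambda>_. GN)) ((\<lambda>x. \<lambda>i\<in>K. f i (x i)) -` Pi\<^sub>E K A \<inter> space (PiM K (\<lambda>_. GN)))"
      by (rule emeasure_distr[OF meas]) (intro sets_PiM_I_finite K A)
    also have "(\<lambda>x. \<lambda>i\<in>K. f i (x i)) -` Pi\<^sub>E K A \<inter> space (PiM K (\<lambda>_. GN)) = Pi\<^sub>E K (\<lambda>i. f i -` A i \<inter> space GN)"
      by (auto simp: space_PiM PiE_def Pi_def extensional_def)
    also have "emeasure (PiM K (\<lambda>_. GN)) (Pi\<^sub>E K (\<lambda>i. f i -` A i \<inter> space GN)) = (\<Prod>i\<in>K. emeasure GN (f i -` A i \<inter> space GN))"
    proof (rule emeasure_PiM[OF K])
      fix i assume i: "i \<in> K"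
      show "f i -` A i \<inter> space GN \<in> sets GN" using measurable_sets[OF fm'[OF i] A[OF i]] .
    qed
    also have "\<dots> = (\<Prod>i\<in>K. emeasure (distr GN GN (f i)) (A i))"
      by (intro prod.cong refl emeasure_distr[symmetric] fm' A)
    also have "\<dots> = (\<Prod>i\<in>K. emeasure GN (A i))"
      by (intro prod.cong refl) (simp add: fd)
    finally show "emeasure (distr (PiM K (\<lambda>_. GN)) (PiM K (\<lambda>_. GN)) (\<lambda>x. \<lambda>i\<in>K. f i (x i))) (Pi\<^sub>E K A) = (\<Prod>i\<in>K. emeasure GN (A i))" .
  qed
qed

lemma distr_PiM_flip:
  fixes K :: "'i set"
  assumes K: "finite K" and e: "e \<in> signs K"
  shows "distr (PiM K (\<lambda>_. GN)) (PiM K (\<lambda>_. GN)) (\<lambda>x. \<lambda>i\<in>K. e i * x i) = PiM K (\<lambda>_. GN)"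
proof (rule distr_PiM_indexed[OF K])
  fix i assume i: "i \<in> K"
  show "(\<lambda>x. e i * x) \<in> borel_measurable borel" by simp
  have "e i = -1 \<or> e i = 1" using e i unfolding signs_def by auto
  then show "distr GN GN (\<lambda>x. e i * x) = GN" by (rule N_sym)
qed

definition supL :: "'t set \<Rightarrow> ('t \<Rightarrow> 'i \<Rightarrow> real) \<Rightarrow> 'i set \<Rightarrow> ('i \<Rightarrow> real) \<Rightarrow> real" where
  "supL T a K x = (SUP t\<in>T. \<Sum>k\<in>K. x k * a t k)"

lemma lin_bound:
  fixes a x :: "'i \<Rightarrow> real"
  assumes "\<forall>k\<in>K. \<bar>a k\<bar> \<le> B"
  shows "\<bar>\<Sum>k\<in>K. x k * a k\<bar> \<le> B * (\<Sum>k\<in>K. \<bar>x k\<bar>)"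
proof -
  have "\<bar>\<Sum>k\<in>K. x k * a k\<bar> \<le> (\<Sum>k\<in>K. \<bar>x k * a k\<bar>)" by (rule sum_abs)
  also have "\<dots> \<le> (\<Sum>k\<in>K. B * \<bar>x k\<bar>)"
  proof (rule sum_mono)
    fix k assume "k \<in> K"
    then have "\<bar>x k\<bar> * \<bar>a k\<bar> \<le> \<bar>x k\<bar> * B" using assms by (intro mult_left_mono) auto
    then show "\<bar>x k * a k\<bar> \<le> B * \<bar>x k\<bar>" by (simp add: abs_mult mult.commute)
  qed
  finally show ?thesis by (simp add: sum_distrib_left)
qed

lemma supL_bdd:
  fixes a :: "'t \<Rightarrow> 'i \<Rightarrow> real" and x :: "'i \<Rightarrow> real"
  assumes "\<forall>t\<in>T. \<forall>k\<in>K. \<bar>a t k\<bar> \<le> B"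
  shows "bdd_above ((\<lambda>t. \<Sum>k\<in>K. x k * a t k) ` T)"
  by (rule bdd_above_bound[where B="B * (\<Sum>k\<in>K. \<bar>x k\<bar>)"]) (use assms in \<open>auto intro!: lin_bound\<close>)

lemma supL_lip:
  fixes a :: "'t \<Rightarrow> 'i \<Rightarrow> real" and x y :: "'i \<Rightarrow> real"
  assumes T: "T \<noteq> {}" and ab: "\<forall>t\<in>T. \<forall>k\<in>K. \<bar>a t k\<bar> \<le> B"
  shows "supL T a K x \<le> supL T a K y + B * (\<Sum>k\<in>K. \<bar>x k - y k\<bar>)"
  unfolding supL_def
proof (rule cSUP_least[OF T])
  fix t assume t: "t \<in> T"
  have "(\<Sum>k\<in>K. x k * a t k) = (\<Sum>k\<in>K. y k * a t k) + (\<Sum>k\<in>K. (x k - y k) * a t k)"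
    by (simp add: sum.distrib[symmetric] algebra_simps)
  also have "\<dots> \<le> (SUP t\<in>T. \<Sum>k\<in>K. y k * a t k) + B * (\<Sum>k\<in>K. \<bar>x k - y k\<bar>)"
  proof (rule add_mono)
    show "(\<Sum>k\<in>K. y k * a t k) \<le> (SUP t\<in>T. \<Sum>k\<in>K. y k * a t k)"
      by (rule cSUP_upper[OF t supL_bdd[OF ab]])
    show "(\<Sum>k\<in>K. (x k - y k) * a t k) \<le> B * (\<Sum>k\<in>K. \<bar>x k - y k\<bar>)"
      using lin_bound[of K "a t" B "\<lambda>k. x k - y k"] ab t by auto
  qed
  finally show "(\<Sum>k\<in>K. x k * a t k) \<le> (SUP t\<in>T. \<Sum>k\<in>K. y k * a t k) + B * (\<Sum>k\<in>K. \<bar>x k - y k\<bar>)" .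
qed

lemma supL_zero: "T \<noteq> {} \<Longrightarrow> supL T a K (\<lambda>_. 0) = 0"
  unfolding supL_def by simp

lemma supL_abs:
  fixes a :: "'t \<Rightarrow> 'i \<Rightarrow> real" and x :: "'i \<Rightarrow> real"
  assumes T: "T \<noteq> {}" and ab: "\<forall>t\<in>T. \<forall>k\<in>K. \<bar>a t k\<bar> \<le> B"
  shows "\<bar>supL T a K x\<bar> \<le> B * (\<Sum>k\<in>K. \<bar>x k\<bar>)"
  using supL_lip[OF T ab, of x "\<lambda>_. 0"] supL_lip[OF T ab, of "\<lambda>_. 0" x] supL_zero[OF T, of a K]
  by simp

lemma supL_cont:
  fixes a :: "'t \<Rightarrow> 'i::countable \<Rightarrow> real"
  assumes T: "T \<noteq> {}" and ab: "\<forall>t\<in>T. \<forall>k\<in>K. \<bar>a t k\<bar> \<le> B"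
  shows "continuous_on UNIV (supL T a K)"
proof (rule continuous_on_sequentiallyI)
  fix u :: "nat \<Rightarrow> 'i \<Rightarrow> real" and x assume u: "u \<longlonglongrightarrow> x"
  have cu: "(\<lambda>n. u n k) \<longlonglongrightarrow> x k" for k
    using continuous_on_tendsto_compose[OF continuous_on_product_coordinates u] by simp
  have d: "(\<lambda>n. B * (\<Sum>k\<in>K. \<bar>u n k - x k\<bar>)) \<longlonglongrightarrow> B * (\<Sum>k\<in>K. \<bar>x k - x k\<bar>)"
    by (intro tendsto_intros cu)
  then have d0: "(\<lambda>n. B * (\<Sum>k\<in>K. \<bar>u n k - x k\<bar>)) \<longlonglongrightarrow> 0" by simp
  show "(\<lambda>n. supL T a K (u n)) \<longlonglongrightarrow> supL T a K x"
  proof (rule tendsto_sandwich)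
    show "\<forall>\<^sub>F n in sequentially. supL T a K x - B * (\<Sum>k\<in>K. \<bar>u n k - x k\<bar>) \<le> supL T a K (u n)"
    proof (rule always_eventually, rule allI)
      fix n
      have "(\<Sum>k\<in>K. \<bar>x k - u n k\<bar>) = (\<Sum>k\<in>K. \<bar>u n k - x k\<bar>)"
        by (intro sum.cong refl) (rule abs_minus_commute)
      then show "supL T a K x - B * (\<Sum>k\<in>K. \<bar>u n k - x k\<bar>) \<le> supL T a K (u n)"
        using supL_lip[OF T ab, of x "u n"] by simp
    qed
    show "\<forall>\<^sub>F n in sequentially. supL T a K (u n) \<le> supL T a K x + B * (\<Sum>k\<in>K. \<bar>u n k - x k\<bar>)"
      using supL_lip[OF T ab] by simp
    show "(\<lambda>n. supL T a K x - B * (\<Sum>k\<in>K. \<bar>u n k - x k\<bar>)) \<longlonglongrightarrow> supL T a K x"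
      using tendsto_diff[OF tendsto_const d0] by simp
    show "(\<lambda>n. supL T a K x + B * (\<Sum>k\<in>K. \<bar>u n k - x k\<bar>)) \<longlonglongrightarrow> supL T a K x"
      using tendsto_add[OF tendsto_const d0] by simp
  qed
qed

lemma cont_meas:
  fixes Phi :: "('i::countable \<Rightarrow> real) \<Rightarrow> real"
  assumes c: "continuous_on UNIV Phi" and h: "\<And>k. (\<lambda>w. h w k) \<in> borel_measurable M"
  shows "(\<lambda>w. Phi (h w)) \<in> borel_measurable M"
proof -
  have "h \<in> borel_measurable M" by (rule measurable_coordinatewise_then_product) (rule h)
  then show ?thesis using measurable_compose[OF _ borel_measurable_continuous_onI[OF c]] by blast
qed

definition GM :: "'i set \<Rightarrow> ('i \<Rightarrow> real) measure" where
  "GM K = PiM K (\<lambda>_. GN)"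

lemma prob_GM: "prob_space (GM K)"
  unfolding GM_def by (rule prob_space_PiM) (rule prob_N)

lemma coord_meas: "(\<lambda>g. g k) \<in> borel_measurable (GM K)"
proof (cases "k \<in> K")
  case True
  have "(\<lambda>g. g k) \<in> measurable (GM K) GN" unfolding GM_def by (rule measurable_component_singleton[OF True])
  then show ?thesis by (subst measurable_cong_sets[OF refl sets_N[symmetric]])
next
  case False
  have "(\<lambda>g. undefined) \<in> borel_measurable (GM K)" by simp
  then show ?thesis
    by (rule measurable_cong[THEN iffD1, rotated]) (use False in \<open>auto simp: GM_def space_PiM PiE_def extensional_def\<close>)
qed

lemma comp_distr: "k \<in> K \<Longrightarrow> distr (GM K) GN (\<lambda>g. g k) = GN"
  unfolding GM_def by (rule product_prob_space.PiM_component[OF prod_N])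

lemma comp_meas': "k \<in> K \<Longrightarrow> (\<lambda>g. g k) \<in> measurable (GM K) GN"
  unfolding GM_def by (rule measurable_component_singleton)

lemma integrable_N_id: "integrable GN (\<lambda>x. x)"
  using integrable_std_normal_distribution_moment[of 1] by simp

lemma integrable_N_abs: "integrable GN (\<lambda>x. \<bar>x\<bar>)"
  using integrable_abs[OF integrable_N_id] by simp

definition cG :: real where "cG = integral\<^sup>L GN (\<lambda>x. \<bar>x\<bar>)"

lemma cG_val: "cG = sqrt (2 / pi)"
  using std_normal_distribution_odd_moments_abs[of 0] unfolding cG_def by simp

lemma cG_pos: "cG > 0"
  unfolding cG_val by simp

lemma integrable_comp:
  fixes f :: "real \<Rightarrow> real"
  assumes k: "k \<in> K" and f: "f \<in> borel_measurable borel" and i: "integrable GN f"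
  shows "integrable (GM K) (\<lambda>g. f (g k))"
proof -
  have fm: "f \<in> borel_measurable GN" by (subst measurable_cong_sets[OF sets_N refl]) (rule f)
  have "integrable (distr (GM K) GN (\<lambda>g. g k)) f" using i comp_distr[OF k] by simp
  then show ?thesis using integrable_distr_eq[OF comp_meas'[OF k] fm] by simp
qed

lemma integral_comp:
  fixes f :: "real \<Rightarrow> real"
  assumes k: "k \<in> K" and f: "f \<in> borel_measurable borel"
  shows "integral\<^sup>L (GM K) (\<lambda>g. f (g k)) = integral\<^sup>L GN f"
proof -
  have fm: "f \<in> borel_measurable GN" by (subst measurable_cong_sets[OF sets_N refl]) (rule f)
  have "integral\<^sup>L (distr (GM K) GN (\<lambda>g. g k)) f = integral\<^sup>L (GM K) (\<lambda>g. f (g k))"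
    by (rule integral_distr[OF comp_meas'[OF k] fm])
  then show ?thesis using comp_distr[OF k] by simp
qed

lemma int_abs_comp: "k \<in> K \<Longrightarrow> integral\<^sup>L (GM K) (\<lambda>g. \<bar>g k\<bar>) = cG"
  unfolding cG_def by (rule integral_comp) auto

lemma integrable_abs_comp: "k \<in> K \<Longrightarrow> integrable (GM K) (\<lambda>g. \<bar>g k\<bar>)"
  by (rule integrable_comp) (auto intro: integrable_N_abs)

lemma integrable_id_comp: "k \<in> K \<Longrightarrow> integrable (GM K) (\<lambda>g. g k)"
  by (rule integrable_comp) (auto intro: integrable_N_id)

lemma int_id_comp: "k \<in> K \<Longrightarrow> integral\<^sup>L (GM K) (\<lambda>g. g k) = 0"
proof -
  assume k: "k \<in> K"
  have "integral\<^sup>L (GM K) (\<lambda>g. g k) = integral\<^sup>L GN (\<lambda>x. x)" by (rule integral_comp[OF k]) simp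
  also have "\<dots> = 0" using integral_std_normal_distribution_moment_odd[of 1] by simp
  finally show ?thesis .
qed

lemma integ_Phi:
  fixes Phi :: "('i::countable \<Rightarrow> real) \<Rightarrow> real"
  assumes K: "finite K" and c: "continuous_on UNIV Phi" and C: "C \<ge> 0"
    and bd: "\<And>x. \<bar>Phi x\<bar> \<le> C * (\<Sum>k\<in>K. \<bar>x k\<bar>)"
    and hm: "\<And>k. (\<lambda>g. h g k) \<in> borel_measurable (GM K)"
    and hb: "\<And>g k. k \<in> K \<Longrightarrow> \<bar>h g k\<bar> \<le> \<bar>g k\<bar>"
  shows "integrable (GM K) (\<lambda>g. Phi (h g))"
proof (rule Bochner_Integration.integrable_bound[where f="\<lambda>g. C * (\<Sum>k\<in>K. \<bar>g k\<bar>)"])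
  show "integrable (GM K) (\<lambda>g. C * (\<Sum>k\<in>K. \<bar>g k\<bar>))"
  proof -
    have "integrable (GM K) (\<lambda>g. \<Sum>k\<in>K. \<bar>g k\<bar>)" by (rule Bochner_Integration.integrable_sum) (rule integrable_abs_comp)
    then show ?thesis by simp
  qed
  show "(\<lambda>g. Phi (h g)) \<in> borel_measurable (GM K)" by (rule cont_meas[OF c hm])
  show "AE g in GM K. norm (Phi (h g)) \<le> norm (C * (\<Sum>k\<in>K. \<bar>g k\<bar>))"
  proof (rule AE_I2)
    fix g
    have "\<bar>Phi (h g)\<bar> \<le> C * (\<Sum>k\<in>K. \<bar>h g k\<bar>)" by (rule bd)
    also have "\<dots> \<le> C * (\<Sum>k\<in>K. \<bar>g k\<bar>)" by (intro mult_left_mono sum_mono hb C)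
    also have "\<dots> \<le> \<bar>C * (\<Sum>k\<in>K. \<bar>g k\<bar>)\<bar>" by simp
    finally show "norm (Phi (h g)) \<le> norm (C * (\<Sum>k\<in>K. \<bar>g k\<bar>))" by simp
  qed
qed

lemma flip_meas:
  assumes e: "e \<in> signs K"
  shows "(\<lambda>g. \<lambda>k\<in>K. e k * g k) \<in> measurable (GM K) (GM K)"
  unfolding GM_def
proof (rule measurable_restrict)
  fix i assume i: "i \<in> K"
  have "(\<lambda>x. x i) \<in> measurable (PiM K (\<lambda>_. GN)) GN" by (rule measurable_component_singleton[OF i])
  then have "(\<lambda>x. x i) \<in> borel_measurable (PiM K (\<lambda>_. GN))" by (subst measurable_cong_sets[OF refl sets_N[symmetric]])
  then have "(\<lambda>x. e i * x i) \<in> borel_measurable (PiM K (\<lambda>_. GN))" by simp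
  then show "(\<lambda>x. e i * x i) \<in> measurable (PiM K (\<lambda>_. GN)) GN" by (subst measurable_cong_sets[OF refl sets_N])
qed

lemma meas_coord_restrict: "(\<lambda>g. (\<lambda>k\<in>K. e k * g k) i) \<in> borel_measurable (GM K)"
  by (cases "i \<in> K") (auto intro!: borel_measurable_times coord_meas)

lemma meas_coord_abs: "(\<lambda>g. e k * \<bar>g k\<bar>) \<in> borel_measurable (GM K)"
  by (intro borel_measurable_times borel_measurable_abs coord_meas) simp

lemma signs_pointwise:
  fixes Phi :: "('i \<Rightarrow> real) \<Rightarrow> real"
  assumes loc: "\<And>x y. (\<forall>k\<in>K. x k = y k) \<Longrightarrow> Phi x = Phi y"
  shows "(\<Sum>e\<in>signs K. Phi (\<lambda>k\<in>K. e k * g k)) = (\<Sum>e\<in>signs K. Phi (\<lambda>k. e k * \<bar>g k\<bar>))"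
proof -
  define sg where "sg = (\<lambda>x::real. if x < 0 then -1 else (1::real))"
  define s where "s = (\<lambda>e. \<lambda>k. if k \<in> K then e k * sg (g k) else undefined)"
  have inv: "\<forall>e\<in>signs K. s e \<in> signs K \<and> s (s e) = e"
    unfolding s_def signs_def sg_def by (auto simp: PiE_def Pi_def extensional_def fun_eq_iff)
  have "(\<Sum>e\<in>signs K. Phi (\<lambda>k\<in>K. e k * g k)) = (\<Sum>e\<in>signs K. (\<lambda>e. Phi (\<lambda>k. e k * \<bar>g k\<bar>)) (s e))"
  proof (rule sum.cong[OF refl], rule loc, intro ballI)
    fix e k assume "k \<in> K"
    then show "(\<lambda>k\<in>K. e k * g k) k = s e k * \<bar>g k\<bar>" unfolding s_def sg_def by auto
  qed
  also have "\<dots> = (\<Sum>e\<in>signs K. Phi (\<lambda>k. e k * \<bar>g k\<bar>))" by (rule sum_invol[OF inv])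
  finally show ?thesis .
qed

lemma sign_avg:
  fixes Phi :: "('i::countable \<Rightarrow> real) \<Rightarrow> real"
  assumes K: "finite K" and c: "continuous_on UNIV Phi" and C: "C \<ge> 0"
    and bd: "\<And>x. \<bar>Phi x\<bar> \<le> C * (\<Sum>k\<in>K. \<bar>x k\<bar>)"
    and loc: "\<And>x y. (\<forall>k\<in>K. x k = y k) \<Longrightarrow> Phi x = Phi y"
  shows "real (card (signs K)) * integral\<^sup>L (GM K) Phi
    = integral\<^sup>L (GM K) (\<lambda>g. \<Sum>e\<in>signs K. Phi (\<lambda>k. e k * \<bar>g k\<bar>))"
proof -
  have Pm: "Phi \<in> borel_measurable (GM K)"
  proof -
    have "(\<lambda>g. Phi ((\<lambda>w. w) g)) \<in> borel_measurable (GM K)" by (rule cont_meas[OF c]) (simp add: coord_meas)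
    then show ?thesis by simp
  qed
  have i1: "integrable (GM K) (\<lambda>g. Phi (\<lambda>k\<in>K. e k * g k))" if e: "e \<in> signs K" for e
  proof (rule integ_Phi[OF K c C bd meas_coord_restrict])
    fix g k assume k: "k \<in> K"
    have "\<bar>e k\<bar> * \<bar>g k\<bar> \<le> 1 * \<bar>g k\<bar>" by (rule mult_right_mono) (use signs_bound[OF e k] in auto)
    then show "\<bar>(\<lambda>k\<in>K. e k * g k) k\<bar> \<le> \<bar>g k\<bar>" using k by (simp add: abs_mult)
  qed
  have eq1: "integral\<^sup>L (GM K) Phi = integral\<^sup>L (GM K) (\<lambda>g. Phi (\<lambda>k\<in>K. e k * g k))" if e: "e \<in> signs K" for e
  proof -
    have "integral\<^sup>L (GM K) Phi = integral\<^sup>L (distr (GM K) (GM K) (\<lambda>g. \<lambda>k\<in>K. e k * g k)) Phi"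
      using distr_PiM_flip[OF K e] unfolding GM_def by simp
    also have "\<dots> = integral\<^sup>L (GM K) (\<lambda>g. Phi (\<lambda>k\<in>K. e k * g k))"
      by (rule integral_distr[OF flip_meas[OF e] Pm])
    finally show ?thesis .
  qed
  have e1: "\<bar>e k\<bar> \<le> 1" if "e \<in> signs K" "k \<in> K" for e k by (rule signs_bound[OF that])
  have i2: "integrable (GM K) (\<lambda>g. Phi (\<lambda>k. e k * \<bar>g k\<bar>))" if e: "e \<in> signs K" for e
  proof (rule integ_Phi[OF K c C bd meas_coord_abs])
    fix g k assume k: "k \<in> K"
    have "\<bar>e k\<bar> * \<bar>g k\<bar> \<le> 1 * \<bar>g k\<bar>" by (rule mult_right_mono) (use e1[OF e k] in auto)
    then show "\<bar>e k * \<bar>g k\<bar>\<bar> \<le> \<bar>g k\<bar>" by (simp add: abs_mult)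
  qed
  have "real (card (signs K)) * integral\<^sup>L (GM K) Phi = (\<Sum>e\<in>signs K. integral\<^sup>L (GM K) Phi)" by simp
  also have "\<dots> = (\<Sum>e\<in>signs K. integral\<^sup>L (GM K) (\<lambda>g. Phi (\<lambda>k\<in>K. e k * g k)))"
    by (rule sum.cong[OF refl]) (rule eq1)
  also have "\<dots> = integral\<^sup>L (GM K) (\<lambda>g. \<Sum>e\<in>signs K. Phi (\<lambda>k\<in>K. e k * g k))"
    by (rule Bochner_Integration.integral_sum[symmetric]) (rule i1)
  also have "\<dots> = integral\<^sup>L (GM K) (\<lambda>g. \<Sum>e\<in>signs K. Phi (\<lambda>k. e k * \<bar>g k\<bar>))"
    by (rule Bochner_Integration.integral_cong[OF refl]) (rule signs_pointwise[OF loc])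
  finally show ?thesis .
qed

lemma sign_avg_integrable:
  fixes Phi :: "('i::countable \<Rightarrow> real) \<Rightarrow> real"
  assumes K: "finite K" and c: "continuous_on UNIV Phi" and C: "C \<ge> 0"
    and bd: "\<And>x. \<bar>Phi x\<bar> \<le> C * (\<Sum>k\<in>K. \<bar>x k\<bar>)" and e: "e \<in> signs K"
  shows "integrable (GM K) (\<lambda>g. Phi (\<lambda>k. e k * \<bar>g k\<bar>))"
proof (rule integ_Phi[OF K c C bd meas_coord_abs])
  fix g k assume k: "k \<in> K"
  have "\<bar>e k\<bar> * \<bar>g k\<bar> \<le> 1 * \<bar>g k\<bar>" by (rule mult_right_mono) (use signs_bound[OF e k] in auto)
  then show "\<bar>e k * \<bar>g k\<bar>\<bar> \<le> \<bar>g k\<bar>" by (simp add: abs_mult)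
qed

lemma supL_loc: "(\<forall>k\<in>K. x k = y k) \<Longrightarrow> supL T a K x = supL T a K y"
  unfolding supL_def by (intro SUP_cong refl sum.cong) auto

lemma RG:
  fixes a :: "'t \<Rightarrow> 'i::countable \<Rightarrow> real"
  assumes K: "finite K" and T: "T \<noteq> {}" and ab: "\<forall>t\<in>T. \<forall>k\<in>K. \<bar>a t k\<bar> \<le> B"
  shows "(\<Sum>e\<in>signs K. supL T a K e) \<le> real (card (signs K)) / cG * integral\<^sup>L (GM K) (supL T a K)"
proof -
  have c: "continuous_on UNIV (supL T a K)" by (rule supL_cont[OF T ab])
  have bd: "\<bar>supL T a K x\<bar> \<le> \<bar>B\<bar> * (\<Sum>k\<in>K. \<bar>x k\<bar>)" for x
  proof -
    have "\<bar>supL T a K x\<bar> \<le> B * (\<Sum>k\<in>K. \<bar>x k\<bar>)" by (rule supL_abs[OF T ab])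
    also have "\<dots> \<le> \<bar>B\<bar> * (\<Sum>k\<in>K. \<bar>x k\<bar>)" by (intro mult_right_mono) (auto intro: sum_nonneg)
    finally show ?thesis .
  qed
  have C: "\<bar>B\<bar> \<ge> 0" by simp
  note SA = sign_avg[OF K c C bd supL_loc]
  note SI = sign_avg_integrable[OF K c C bd]
  have one: "supL T a K e \<le> (1 / cG) * integral\<^sup>L (GM K) (\<lambda>g. supL T a K (\<lambda>k. e k * \<bar>g k\<bar>))"
    if e: "e \<in> signs K" for e
    unfolding supL_def[of T a K e]
  proof (rule cSUP_least[OF T])
    fix t assume t: "t \<in> T"
    have lin_int: "integrable (GM K) (\<lambda>g. \<Sum>k\<in>K. (e k * \<bar>g k\<bar>) * a t k)"
      by (rule Bochner_Integration.integrable_sum) (auto intro!: integrable_abs_comp simp: mult.commute[of _ "a t _"] mult.assoc)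
    have "integral\<^sup>L (GM K) (\<lambda>g. \<Sum>k\<in>K. (e k * \<bar>g k\<bar>) * a t k) = (\<Sum>k\<in>K. integral\<^sup>L (GM K) (\<lambda>g. (e k * a t k) * \<bar>g k\<bar>))"
      by (subst Bochner_Integration.integral_sum) (auto intro!: integrable_abs_comp simp: mult.commute[of _ "a t _"] mult.assoc mult.left_commute)
    also have "\<dots> = (\<Sum>k\<in>K. (e k * a t k) * cG)"
      by (intro sum.cong refl) (simp add: int_abs_comp)
    finally have lin_val: "integral\<^sup>L (GM K) (\<lambda>g. \<Sum>k\<in>K. (e k * \<bar>g k\<bar>) * a t k) = cG * (\<Sum>k\<in>K. e k * a t k)"
      by (simp add: sum_distrib_left mult.commute)
    have "integral\<^sup>L (GM K) (\<lambda>g. \<Sum>k\<in>K. (e k * \<bar>g k\<bar>) * a t k) \<le> integral\<^sup>L (GM K) (\<lambda>g. supL T a K (\<lambda>k. e k * \<bar>g k\<bar>))"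
    proof (rule integral_mono[OF lin_int SI[OF e]])
      fix g
      show "(\<Sum>k\<in>K. (e k * \<bar>g k\<bar>) * a t k) \<le> supL T a K (\<lambda>k. e k * \<bar>g k\<bar>)"
        unfolding supL_def by (rule cSUP_upper[OF t supL_bdd[OF ab]])
    qed
    then have "cG * (\<Sum>k\<in>K. e k * a t k) \<le> integral\<^sup>L (GM K) (\<lambda>g. supL T a K (\<lambda>k. e k * \<bar>g k\<bar>))"
      using lin_val by simp
    then show "(\<Sum>k\<in>K. e k * a t k) \<le> 1 / cG * integral\<^sup>L (GM K) (\<lambda>g. supL T a K (\<lambda>k. e k * \<bar>g k\<bar>))"
      using cG_pos by (simp add: field_simps)
  qed
  have "(\<Sum>e\<in>signs K. supL T a K e) \<le> (\<Sum>e\<in>signs K. (1 / cG) * integral\<^sup>L (GM K) (\<lambda>g. supL T a K (\<lambda>k. e k * \<bar>g k\<bar>)))"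
    by (rule sum_mono) (rule one)
  also have "\<dots> = (1 / cG) * integral\<^sup>L (GM K) (\<lambda>g. \<Sum>e\<in>signs K. supL T a K (\<lambda>k. e k * \<bar>g k\<bar>))"
    by (subst Bochner_Integration.integral_sum) (auto intro: SI simp: sum_distrib_left)
  also have "\<dots> = (1 / cG) * (real (card (signs K)) * integral\<^sup>L (GM K) (supL T a K))"
    by (simp only: SA)
  finally show ?thesis by simp
qed

lemma card_signs: "finite K \<Longrightarrow> card (signs K) = 2 ^ card K"
  unfolding signs_def by (simp add: card_PiE numeral_2_eq_2)

lemma quartic_aux:
  fixes v :: real assumes v: "v \<ge> 0"
  shows "v\<^sup>2 - 4/27 * v^4 \<le> v"
proof -
  have "0 \<le> 4/27 * v * (v - 3/2)\<^sup>2 * (v + 3)" using v by simp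
  also have "4/27 * v * (v - 3/2)\<^sup>2 * (v + 3) = v - v\<^sup>2 + 4/27 * v^4"
    by (simp add: power2_eq_square power4_eq_xxxx field_simps)
  finally show ?thesis by simp
qed

lemma quartic_bound:
  fixes x s :: real assumes s: "s > 0"
  shows "x\<^sup>2 / s - 4/27 * x^4 / s^3 \<le> \<bar>x\<bar>"
proof -
  define v where "v = \<bar>x\<bar> / s"
  have v: "v \<ge> 0" unfolding v_def using s by simp
  have x2: "x\<^sup>2 = s\<^sup>2 * v\<^sup>2" unfolding v_def using s by (simp add: power_divide)
  have x4: "x^4 = s^4 * v^4" unfolding v_def using s
    by (simp add: power_divide)
  have "x\<^sup>2 / s - 4/27 * x^4 / s^3 = s * (v\<^sup>2 - 4/27 * v^4)"
    unfolding x2 x4 using s by (simp add: field_simps power2_eq_square power3_eq_cube power4_eq_xxxx)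
  also have "\<dots> \<le> s * v" by (rule mult_left_mono[OF quartic_aux[OF v]]) (use s in simp)
  also have "s * v = \<bar>x\<bar>" unfolding v_def using s by simp
  finally show ?thesis .
qed

lemma signs_moments:
  fixes y :: "'i \<Rightarrow> real"
  assumes K: "finite K"
  shows "(\<Sum>e\<in>signs K. (\<Sum>k\<in>K. e k * y k)\<^sup>2) = real (card (signs K)) * (\<Sum>k\<in>K. (y k)\<^sup>2)
       \<and> (\<Sum>e\<in>signs K. (\<Sum>k\<in>K. e k * y k)^4) \<le> 3 * real (card (signs K)) * (\<Sum>k\<in>K. (y k)\<^sup>2)\<^sup>2"
  using K
proof (induction K rule: finite_induct)
  case empty
  then show ?case by (simp add: signs_def)
next
  case (insert j K)
  define X where "X = (\<lambda>g. \<Sum>k\<in>K. g k * y k)"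
  define Q where "Q = (\<Sum>k\<in>K. (y k)\<^sup>2)"
  define E where "E = real (card (signs K))"
  have cE: "real (card (signs (insert j K))) = 2 * E"
    unfolding E_def using insert(1,2) by (simp add: card_signs)
  have Q': "(\<Sum>k\<in>insert j K. (y k)\<^sup>2) = Q + (y j)\<^sup>2" unfolding Q_def using insert(1,2) by simp
  have Xs: "(\<Sum>k\<in>insert j K. (g(j:=s)) k * y k) = s * y j + X g" for g s
    unfolding X_def using insert(1,2) by (simp add: sum.insert) (intro sum.cong; auto)
  have IH2: "(\<Sum>g\<in>signs K. (X g)\<^sup>2) = E * Q" and IH4: "(\<Sum>g\<in>signs K. (X g)^4) \<le> 3 * E * Q\<^sup>2"
    using insert(3) unfolding X_def Q_def E_def by auto
  have Q0: "Q \<ge> 0" unfolding Q_def by (simp add: sum_nonneg)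
  have E0: "E \<ge> 0" unfolding E_def by simp
  have m2: "(\<Sum>e\<in>signs (insert j K). (\<Sum>k\<in>insert j K. e k * y k)\<^sup>2) = (\<Sum>g\<in>signs K. 2 * (X g)\<^sup>2 + 2 * (y j)\<^sup>2)"
    unfolding sum_signs_insert[OF insert(2)] Xs
    by (intro sum.cong refl) (simp add: power2_eq_square algebra_simps)
  also have "\<dots> = 2 * E * Q + 2 * E * (y j)\<^sup>2"
    by (simp add: sum.distrib sum_distrib_left[symmetric] IH2 E_def)
  finally have M2: "(\<Sum>e\<in>signs (insert j K). (\<Sum>k\<in>insert j K. e k * y k)\<^sup>2) = 2 * E * Q + 2 * E * (y j)\<^sup>2" .
  have "(\<Sum>e\<in>signs (insert j K). (\<Sum>k\<in>insert j K. e k * y k)^4)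
      = (\<Sum>g\<in>signs K. 2 * (X g)^4 + 12 * (y j)\<^sup>2 * (X g)\<^sup>2 + 2 * (y j)^4)"
    unfolding sum_signs_insert[OF insert(2)] Xs
    by (intro sum.cong refl) (simp add: power2_eq_square power4_eq_xxxx algebra_simps)
  also have "\<dots> = 2 * (\<Sum>g\<in>signs K. (X g)^4) + 12 * (y j)\<^sup>2 * (E * Q) + 2 * E * (y j)^4"
    by (simp add: sum.distrib sum_distrib_left[symmetric] IH2 E_def)
  also have "\<dots> \<le> 2 * (3 * E * Q\<^sup>2) + 12 * (y j)\<^sup>2 * (E * Q) + 2 * E * (y j)^4"
    using IH4 by simp
  also have "\<dots> \<le> 3 * (2 * E) * (Q + (y j)\<^sup>2)\<^sup>2"
  proof -
    have "0 \<le> 4 * E * (y j)^4" using E0 by simp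
    then show ?thesis by (simp add: power2_eq_square power4_eq_xxxx algebra_simps)
  qed
  finally show ?case unfolding cE Q' using M2 by (simp add: algebra_simps)
qed

lemma khintchine_signs:
  fixes y :: "'i \<Rightarrow> real"
  assumes K: "finite K"
  shows "5/9 * real (card (signs K)) * sqrt (\<Sum>k\<in>K. (y k)\<^sup>2) \<le> (\<Sum>e\<in>signs K. \<bar>\<Sum>k\<in>K. e k * y k\<bar>)"
proof (cases "(\<Sum>k\<in>K. (y k)\<^sup>2) = 0")
  case True
  then show ?thesis by (simp add: sum_nonneg)
next
  case False
  define Q where "Q = (\<Sum>k\<in>K. (y k)\<^sup>2)"
  define E where "E = real (card (signs K))"
  define s where "s = sqrt Q"
  have Q0: "Q > 0" using False unfolding Q_def by (metis less_eq_real_def sum_nonneg zero_le_power2)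
  have s0: "s > 0" unfolding s_def using Q0 by simp
  have ss: "s\<^sup>2 = Q" unfolding s_def using Q0 by simp
  have E0: "E \<ge> 0" unfolding E_def by simp
  note mom = signs_moments[OF K, of y]
  have "(\<Sum>e\<in>signs K. \<bar>\<Sum>k\<in>K. e k * y k\<bar>) \<ge> (\<Sum>e\<in>signs K. (\<Sum>k\<in>K. e k * y k)\<^sup>2 / s - 4/27 * (\<Sum>k\<in>K. e k * y k)^4 / s^3)"
    by (rule sum_mono) (rule quartic_bound[OF s0])
  also have "(\<Sum>e\<in>signs K. (\<Sum>k\<in>K. e k * y k)\<^sup>2 / s - 4/27 * (\<Sum>k\<in>K. e k * y k)^4 / s^3)
     = (\<Sum>e\<in>signs K. (\<Sum>k\<in>K. e k * y k)\<^sup>2) / s - 4/27 * (\<Sum>e\<in>signs K. (\<Sum>k\<in>K. e k * y k)^4) / s^3"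
    by (simp add: sum_subtractf sum_divide_distrib sum_distrib_left)
  also have "\<dots> \<ge> E * Q / s - 4/27 * (3 * E * Q\<^sup>2) / s^3"
  proof -
    have "4/27 * (\<Sum>e\<in>signs K. (\<Sum>k\<in>K. e k * y k)^4) / s^3 \<le> 4/27 * (3 * E * Q\<^sup>2) / s^3"
      using mom s0 unfolding E_def Q_def by (intro divide_right_mono mult_left_mono) auto
    then show ?thesis using mom unfolding E_def Q_def by simp
  qed
  also have "E * Q / s - 4/27 * (3 * E * Q\<^sup>2) / s^3 = 5/9 * E * s"
    unfolding ss[symmetric] using s0 by (simp add: field_simps power2_eq_square power3_eq_cube)
  finally show ?thesis unfolding E_def s_def Q_def by simp
qed

lemma cs_aux:
  fixes z g :: "'i \<Rightarrow> real"
  shows "(\<Sum>k\<in>K. (z k)\<^sup>2 * \<bar>g k\<bar>) \<le> sqrt (\<Sum>k\<in>K. (z k)\<^sup>2) * sqrt (\<Sum>k\<in>K. (z k * \<bar>g k\<bar>)\<^sup>2)"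
proof -
  have "(\<Sum>k\<in>K. \<bar>z k\<bar> * (\<bar>z k\<bar> * \<bar>g k\<bar>))\<^sup>2 \<le> (\<Sum>k\<in>K. \<bar>z k\<bar>\<^sup>2) * (\<Sum>k\<in>K. (\<bar>z k\<bar> * \<bar>g k\<bar>)\<^sup>2)"
    by (rule Cauchy_Schwarz_ineq_sum)
  moreover have "(\<Sum>k\<in>K. \<bar>z k\<bar> * (\<bar>z k\<bar> * \<bar>g k\<bar>)) = (\<Sum>k\<in>K. (z k)\<^sup>2 * \<bar>g k\<bar>)"
    by (intro sum.cong refl) (simp add: power2_eq_square abs_mult_self_eq mult.assoc[symmetric])
  moreover have "(\<Sum>k\<in>K. (\<bar>z k\<bar> * \<bar>g k\<bar>)\<^sup>2) = (\<Sum>k\<in>K. (z k * \<bar>g k\<bar>)\<^sup>2)"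
    by (intro sum.cong refl) (simp add: power_mult_distrib)
  ultimately have "(\<Sum>k\<in>K. (z k)\<^sup>2 * \<bar>g k\<bar>)\<^sup>2 \<le> (\<Sum>k\<in>K. (z k)\<^sup>2) * (\<Sum>k\<in>K. (z k * \<bar>g k\<bar>)\<^sup>2)"
    by simp
  then have "(\<Sum>k\<in>K. (z k)\<^sup>2 * \<bar>g k\<bar>) \<le> sqrt ((\<Sum>k\<in>K. (z k)\<^sup>2) * (\<Sum>k\<in>K. (z k * \<bar>g k\<bar>)\<^sup>2))"
    by (rule real_le_rsqrt)
  then show ?thesis by (simp add: real_sqrt_mult)
qed

lemma GK:
  fixes z :: "'i::countable \<Rightarrow> real"
  assumes K: "finite K"
  shows "5/9 * cG * sqrt (\<Sum>k\<in>K. (z k)\<^sup>2) \<le> integral\<^sup>L (GM K) (\<lambda>g. \<bar>\<Sum>k\<in>K. z k * g k\<bar>)"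
proof (cases "(\<Sum>k\<in>K. (z k)\<^sup>2) = 0")
  case True
  then show ?thesis by (simp add: Bochner_Integration.integral_nonneg)
next
  case False
  define Phi where "Phi = (\<lambda>x::'i\<Rightarrow>real. \<bar>\<Sum>k\<in>K. z k * x k\<bar>)"
  define C where "C = (\<Sum>k\<in>K. \<bar>z k\<bar>)"
  define s where "s = sqrt (\<Sum>k\<in>K. (z k)\<^sup>2)"
  define E where "E = real (card (signs K))"
  have s0: "s > 0" using False unfolding s_def by (metis less_eq_real_def real_sqrt_gt_0_iff sum_nonneg zero_le_power2)
  have ss: "s\<^sup>2 = (\<Sum>k\<in>K. (z k)\<^sup>2)" unfolding s_def by (simp add: sum_nonneg)
  have E0: "E > 0" unfolding E_def using signs_card_pos[OF K] by simp
  have c: "continuous_on UNIV Phi" unfolding Phi_def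
    by (intro continuous_on_rabs continuous_on_sum continuous_on_mult continuous_on_const continuous_on_product_coordinates)
  have C: "C \<ge> 0" unfolding C_def by (simp add: sum_nonneg)
  have bd: "\<bar>Phi x\<bar> \<le> C * (\<Sum>k\<in>K. \<bar>x k\<bar>)" for x
  proof -
    have "\<bar>\<Sum>k\<in>K. x k * z k\<bar> \<le> C * (\<Sum>k\<in>K. \<bar>x k\<bar>)"
      by (rule lin_bound) (auto simp: C_def intro: member_le_sum K)
    then show ?thesis unfolding Phi_def by (simp add: mult.commute)
  qed
  have loc: "Phi x = Phi y" if "\<forall>k\<in>K. x k = y k" for x y
    unfolding Phi_def using that by (intro arg_cong[where f=abs] sum.cong) auto
  note SA = sign_avg[OF K c C bd loc]
  note SI = sign_avg_integrable[OF K c C bd]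
  have low_int: "integrable (GM K) (\<lambda>g. 5/9 * E / s * (\<Sum>k\<in>K. (z k)\<^sup>2 * \<bar>g k\<bar>))"
    by (intro integrable_mult_right Bochner_Integration.integrable_sum integrable_abs_comp)
  have low_val: "integral\<^sup>L (GM K) (\<lambda>g. 5/9 * E / s * (\<Sum>k\<in>K. (z k)\<^sup>2 * \<bar>g k\<bar>)) = 5/9 * E * cG * s"
  proof -
    have "integral\<^sup>L (GM K) (\<lambda>g. \<Sum>k\<in>K. (z k)\<^sup>2 * \<bar>g k\<bar>) = (\<Sum>k\<in>K. (z k)\<^sup>2 * cG)"
      by (subst Bochner_Integration.integral_sum) (auto intro!: integrable_abs_comp simp: int_abs_comp)
    then have "integral\<^sup>L (GM K) (\<lambda>g. 5/9 * E / s * (\<Sum>k\<in>K. (z k)\<^sup>2 * \<bar>g k\<bar>)) = 5/9 * E / s * ((\<Sum>k\<in>K. (z k)\<^sup>2) * cG)"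
      by (simp add: sum_distrib_right)
    also have "\<dots> = 5/9 * E * cG * s" using s0 unfolding ss[symmetric] by (simp add: power2_eq_square field_simps)
    finally show ?thesis .
  qed
  have "5/9 * E * cG * s \<le> integral\<^sup>L (GM K) (\<lambda>g. \<Sum>e\<in>signs K. Phi (\<lambda>k. e k * \<bar>g k\<bar>))"
    unfolding low_val[symmetric]
  proof (rule integral_mono[OF low_int])
    show "integrable (GM K) (\<lambda>g. \<Sum>e\<in>signs K. Phi (\<lambda>k. e k * \<bar>g k\<bar>))"
      by (rule Bochner_Integration.integrable_sum) (rule SI)
    fix g
    have "5/9 * E / s * (\<Sum>k\<in>K. (z k)\<^sup>2 * \<bar>g k\<bar>) \<le> 5/9 * E / s * (s * sqrt (\<Sum>k\<in>K. (z k * \<bar>g k\<bar>)\<^sup>2))"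
      by (rule mult_left_mono) (use cs_aux[of z g K] E0 s0 in \<open>auto simp: s_def\<close>)
    also have "\<dots> = 5/9 * E * sqrt (\<Sum>k\<in>K. (z k * \<bar>g k\<bar>)\<^sup>2)" using s0 by simp
    also have "\<dots> \<le> (\<Sum>e\<in>signs K. \<bar>\<Sum>k\<in>K. e k * (z k * \<bar>g k\<bar>)\<bar>)"
      unfolding E_def by (rule khintchine_signs[OF K])
    also have "\<dots> = (\<Sum>e\<in>signs K. Phi (\<lambda>k. e k * \<bar>g k\<bar>))"
      unfolding Phi_def by (intro sum.cong refl arg_cong[where f=abs]) (simp add: algebra_simps)
    finally show "5/9 * E / s * (\<Sum>k\<in>K. (z k)\<^sup>2 * \<bar>g k\<bar>) \<le> (\<Sum>e\<in>signs K. Phi (\<lambda>k. e k * \<bar>g k\<bar>))" .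
  qed
  also have "\<dots> = E * integral\<^sup>L (GM K) Phi" unfolding E_def by (rule SA[symmetric])
  finally have "5/9 * cG * s \<le> integral\<^sup>L (GM K) Phi" using E0 by (simp add: mult.assoc mult.left_commute[of E])
  then show ?thesis unfolding Phi_def s_def .
qed

lemma sup_scale:
  fixes h :: "'t \<Rightarrow> real"
  assumes c: "c \<ge> 0" and T: "T \<noteq> {}" and b: "bdd_above (h ` T)"
  shows "(SUP t\<in>T. c * h t) = c * (SUP t\<in>T. h t)"
proof (cases "c = 0")
  case True then show ?thesis using T by simp
next
  case False
  then have c0: "c > 0" using c by simp
  have b2: "bdd_above ((\<lambda>t. c * h t) ` T)"
  proof -
    obtain M where "\<forall>t\<in>T. h t \<le> M" using b by (auto simp: bdd_above_def)
    then have "\<forall>t\<in>T. c * h t \<le> c * M" using c by (auto intro: mult_left_mono)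
    then show ?thesis by (auto simp: bdd_above_def)
  qed
  show ?thesis
  proof (rule antisym)
    show "(SUP t\<in>T. c * h t) \<le> c * (SUP t\<in>T. h t)"
      by (rule cSUP_least[OF T]) (intro mult_left_mono cSUP_upper b c; simp)
    have "(SUP t\<in>T. h t) \<le> (SUP t\<in>T. c * h t) / c"
    proof (rule cSUP_least[OF T])
      fix t assume t: "t \<in> T"
      have "c * h t \<le> (SUP t\<in>T. c * h t)" by (rule cSUP_upper[OF t b2])
      then show "h t \<le> (SUP t\<in>T. c * h t) / c" using c0 by (simp add: field_simps)
    qed
    then show "c * (SUP t\<in>T. h t) \<le> (SUP t\<in>T. c * h t)" using c0 by (simp add: field_simps)
  qed
qed

lemma sq_lip:
  fixes x y D :: real
  assumes "\<bar>x\<bar> \<le> D" "\<bar>y\<bar> \<le> D"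
  shows "\<bar>x\<^sup>2 - y\<^sup>2\<bar> \<le> 2 * D * \<bar>x - y\<bar>"
proof -
  have "\<bar>x\<^sup>2 - y\<^sup>2\<bar> = \<bar>x + y\<bar> * \<bar>x - y\<bar>" by (simp add: power2_eq_square abs_mult[symmetric] algebra_simps)
  also have "\<dots> \<le> (2 * D) * \<bar>x - y\<bar>" using assms by (intro mult_right_mono) auto
  finally show ?thesis by simp
qed

lemma omega_bound:
  fixes b :: "'t \<Rightarrow> nat \<Rightarrow> real"
  assumes T: "T \<noteq> {}" and bD: "\<forall>t\<in>T. \<forall>k. \<bar>b t k\<bar> \<le> D" and D: "D \<ge> 0"
  shows "(\<Sum>e\<in>signs {..<m}. SUP t\<in>T. \<Sum>k<m. e k * (b t k)\<^sup>2)
     \<le> 2 * D * (real (card (signs {..<m})) / cG * integral\<^sup>L (GM {..<m}) (supL T b {..<m}))"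
proof -
  define K where "K = {..<m::nat}"
  have K: "finite K" unfolding K_def by simp
  have ba: "\<forall>t\<in>T. \<forall>k. \<bar>b t k\<bar> \<le> D + D\<^sup>2"
  proof (intro ballI allI)
    fix t k assume t: "t \<in> T"
    have "\<bar>b t k\<bar> \<le> D" using bD t by auto
    moreover have "0 \<le> D\<^sup>2" by simp
    ultimately show "\<bar>b t k\<bar> \<le> D + D\<^sup>2" by linarith
  qed
  have bp: "\<forall>t\<in>T. \<forall>k. \<bar>(\<lambda>x. x\<^sup>2) (b t k)\<bar> \<le> D + D\<^sup>2"
  proof (intro ballI allI)
    fix t k assume t: "t \<in> T"
    have "\<bar>b t k\<bar>\<^sup>2 \<le> D\<^sup>2" using bD t by (intro power_mono) auto
    then show "\<bar>(\<lambda>x. x\<^sup>2) (b t k)\<bar> \<le> D + D\<^sup>2" using D by simp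
  qed
  have lip: "\<forall>t\<in>T. \<forall>s\<in>T. \<forall>k. \<bar>(\<lambda>x. x\<^sup>2) (b t k) - (\<lambda>x. x\<^sup>2) (b s k)\<bar> \<le> (2 * D) * \<bar>b t k - b s k\<bar>"
  proof (intro ballI allI)
    fix t s k assume t: "t \<in> T" and s: "s \<in> T"
    show "\<bar>(\<lambda>x. x\<^sup>2) (b t k) - (\<lambda>x. x\<^sup>2) (b s k)\<bar> \<le> (2 * D) * \<bar>b t k - b s k\<bar>"
      using sq_lip[of "b t k" D "b s k"] bD t s by auto
  qed
  have L: "2 * D \<ge> 0" using D by simp
  have con: "(\<Sum>e\<in>signs K. SUP t\<in>T. (\<lambda>_. 0) t + (\<Sum>k\<in>K. e k * (\<lambda>x. x\<^sup>2) (b t k)))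
      \<le> (\<Sum>e\<in>signs K. SUP t\<in>T. (\<lambda>_. 0) t + 2 * D * (\<Sum>k\<in>K. e k * b t k))"
  proof -
    have h0: "\<forall>t\<in>T. \<bar>(\<lambda>_. 0::real) t\<bar> \<le> 0" by simp
    show ?thesis using contraction_gen[OF K T ba bp lip L, rule_format, of "\<lambda>_. 0" 0] by simp
  qed
  have "(\<Sum>e\<in>signs K. SUP t\<in>T. \<Sum>k\<in>K. e k * (b t k)\<^sup>2) \<le> (\<Sum>e\<in>signs K. SUP t\<in>T. 2 * D * (\<Sum>k\<in>K. e k * b t k))"
    using con by simp
  also have "\<dots> = (\<Sum>e\<in>signs K. 2 * D * supL T b K e)"
  proof (rule sum.cong[OF refl])
    fix e
    have bd: "\<forall>t\<in>T. \<forall>k\<in>K. \<bar>b t k\<bar> \<le> D" using bD by auto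
    show "(SUP t\<in>T. 2 * D * (\<Sum>k\<in>K. e k * b t k)) = 2 * D * supL T b K e"
      unfolding supL_def by (rule sup_scale[OF L T supL_bdd[OF bd]])
  qed
  also have "\<dots> = 2 * D * (\<Sum>e\<in>signs K. supL T b K e)" by (simp add: sum_distrib_left)
  also have "\<dots> \<le> 2 * D * (real (card (signs K)) / cG * integral\<^sup>L (GM K) (supL T b K))"
    by (rule mult_left_mono[OF RG[OF K T] L]) (use bD in auto)
  finally show ?thesis unfolding K_def by simp
qed

lemma lin_int:
  fixes w :: "'i::countable \<Rightarrow> real"
  assumes K: "finite K"
  shows "integrable (GM K) (\<lambda>g. \<Sum>k\<in>K. g k * w k)" and "integral\<^sup>L (GM K) (\<lambda>g. \<Sum>k\<in>K. g k * w k) = 0"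
proof -
  show "integrable (GM K) (\<lambda>g. \<Sum>k\<in>K. g k * w k)"
    by (rule Bochner_Integration.integrable_sum) (auto intro: integrable_id_comp)
  have "integral\<^sup>L (GM K) (\<lambda>g. \<Sum>k\<in>K. g k * w k) = (\<Sum>k\<in>K. integral\<^sup>L (GM K) (\<lambda>g. g k * w k))"
    by (rule Bochner_Integration.integral_sum) (auto intro: integrable_id_comp)
  also have "\<dots> = 0" by (simp add: int_id_comp)
  finally show "integral\<^sup>L (GM K) (\<lambda>g. \<Sum>k\<in>K. g k * w k) = 0" .
qed

lemma wG_lower:
  fixes S :: "(nat \<times> nat \<Rightarrow> real) set"
  assumes X0: "X0 \<in> S" and Y0: "Y0 \<in> S" and bnd: "\<forall>X\<in>S. \<forall>p. \<bar>X p\<bar> \<le> 1"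
  shows "5/9 * cG * sqrt (\<Sum>p\<in>idx d1 d2. (X0 p - Y0 p)\<^sup>2) \<le> 2 * wG d1 d2 S"
proof -
  define I where "I = idx d1 d2"
  have I: "finite I" unfolding I_def idx_def by simp
  have T: "S \<noteq> {}" using X0 by auto
  have ab: "\<forall>t\<in>S. \<forall>k\<in>I. \<bar>t k\<bar> \<le> 1" using bnd by auto
  define F where "F = supL S (\<lambda>X. X) I"
  have wG_eq: "wG d1 d2 S = integral\<^sup>L (GM I) F"
    unfolding wG_def F_def supL_def GM_def I_def
    by (intro Bochner_Integration.integral_cong refl SUP_cong sum.cong) (simp add: mult.commute)
  have c: "continuous_on UNIV F" unfolding F_def by (rule supL_cont[OF T ab])
  have bd: "\<bar>F x\<bar> \<le> 1 * (\<Sum>k\<in>I. \<bar>x k\<bar>)" for x unfolding F_def by (rule supL_abs[OF T ab])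
  have Fint: "integrable (GM I) F"
  proof -
    have "integrable (GM I) (\<lambda>g. F ((\<lambda>w. w) g))"
      by (rule integ_Phi[OF I c _ bd]) (auto intro: coord_meas)
    then show ?thesis by simp
  qed
  define z where "z = (\<lambda>p. X0 p - Y0 p)"
  define L where "L = (\<lambda>X g :: nat \<times> nat \<Rightarrow> real. \<Sum>k\<in>I. g k * X k)"
  have absint: "integrable (GM I) (\<lambda>g. \<bar>\<Sum>k\<in>I. z k * g k\<bar>)"
  proof -
    have "integrable (GM I) (\<lambda>g. \<Sum>k\<in>I. g k * z k)" by (rule lin_int[OF I])
    then have "integrable (GM I) (\<lambda>g. \<bar>\<Sum>k\<in>I. g k * z k\<bar>)" by (rule integrable_abs)
    then show ?thesis by (simp add: mult.commute)
  qed
  have low_int: "integrable (GM I) (\<lambda>g. (L X0 g + L Y0 g) / 2 + \<bar>\<Sum>k\<in>I. z k * g k\<bar> / 2)"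
    unfolding L_def using lin_int(1)[OF I, of X0] lin_int(1)[OF I, of Y0] absint by auto
  have low_val: "integral\<^sup>L (GM I) (\<lambda>g. (L X0 g + L Y0 g) / 2 + \<bar>\<Sum>k\<in>I. z k * g k\<bar> / 2)
      = integral\<^sup>L (GM I) (\<lambda>g. \<bar>\<Sum>k\<in>I. z k * g k\<bar>) / 2"
    unfolding L_def using lin_int[OF I, of X0] lin_int[OF I, of Y0] absint by simp
  have "integral\<^sup>L (GM I) (\<lambda>g. (L X0 g + L Y0 g) / 2 + \<bar>\<Sum>k\<in>I. z k * g k\<bar> / 2) \<le> integral\<^sup>L (GM I) F"
  proof (rule integral_mono[OF low_int Fint])
    fix g
    have a: "L X0 g \<le> F g" unfolding L_def F_def supL_def by (rule cSUP_upper[OF X0 supL_bdd[OF ab]])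
    have b: "L Y0 g \<le> F g" unfolding L_def F_def supL_def by (rule cSUP_upper[OF Y0 supL_bdd[OF ab]])
    have d: "(\<Sum>k\<in>I. z k * g k) = L X0 g - L Y0 g"
      unfolding L_def z_def by (simp add: sum_subtractf[symmetric] algebra_simps)
    show "(L X0 g + L Y0 g) / 2 + \<bar>\<Sum>k\<in>I. z k * g k\<bar> / 2 \<le> F g"
      unfolding d using a b by (cases "L X0 g \<le> L Y0 g") (auto simp: abs_if field_simps)
  qed
  then have "integral\<^sup>L (GM I) (\<lambda>g. \<bar>\<Sum>k\<in>I. z k * g k\<bar>) \<le> 2 * wG d1 d2 S"
    unfolding low_val wG_eq by simp
  moreover have "5/9 * cG * sqrt (\<Sum>k\<in>I. (z k)\<^sup>2) \<le> integral\<^sup>L (GM I) (\<lambda>g. \<bar>\<Sum>k\<in>I. z k * g k\<bar>)"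
    by (rule GK[OF I])
  ultimately show ?thesis unfolding z_def I_def by simp
qed

lemma idx_finite: "finite (idx d1 d2)" unfolding idx_def by simp
lemma idx_card: "card (idx d1 d2) = d1 * d2" unfolding idx_def by (simp add: card_cartesian_product)
lemma idx_ne: "0 < d1 \<Longrightarrow> 0 < d2 \<Longrightarrow> idx d1 d2 \<noteq> {}" unfolding idx_def by auto

lemma frob_bound:
  assumes "X \<in> frob_ball d1 d2"
  shows "\<bar>X p\<bar> \<le> 1"
proof (cases "p \<in> idx d1 d2")
  case True
  have "(X p)\<^sup>2 \<le> (\<Sum>q\<in>idx d1 d2. (X q)\<^sup>2)" by (rule member_le_sum[OF True]) (auto simp: idx_finite)
  also have "\<dots> \<le> 1" using assms unfolding frob_ball_def by auto
  finally show ?thesis by (simp add: abs_square_le_1)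
next
  case False
  have "X p = 0" using assms False unfolding frob_ball_def mat_space_def by blast
  then show ?thesis by simp
qed

lemma frob_zero: "X \<in> frob_ball d1 d2 \<Longrightarrow> p \<notin> idx d1 d2 \<Longrightarrow> X p = 0"
  unfolding frob_ball_def mat_space_def by blast

lemma main_bound:
  fixes d1 d2 m :: nat and S :: "(nat \<times> nat \<Rightarrow> real) set"
  assumes d1: "0 < d1" and d2: "0 < d2" and Sf: "S \<subseteq> frob_ball d1 d2" and Sne: "S \<noteq> {}"
  shows "measure_pmf.expectation (Omega_pmf d1 d2 m)
       (\<lambda>\<omega>. SUP (X, Y)\<in>S \<times> S. \<Sum>k<m. (X (\<omega> k) - Y (\<omega> k))\<^sup>2)
    \<le> (324 / (25 * cG\<^sup>2)) * (real m / (real d1 * real d2)) * (wG d1 d2 S)\<^sup>2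
       + (4 / cG) * diam_inf d1 d2 S * wOg d1 d2 m S"
proof -
  define I where "I = idx d1 d2"
  have I: "finite I" "I \<noteq> {}" unfolding I_def using idx_finite idx_ne[OF d1 d2] by auto
  have cI: "real (card I) = real d1 * real d2" unfolding I_def idx_card by simp
  define T where "T = S \<times> S"
  have T: "T \<noteq> {}" unfolding T_def using Sne by simp
  define a where "a = (\<lambda>t::(nat \<times> nat \<Rightarrow> real) \<times> (nat \<times> nat \<Rightarrow> real). \<lambda>p. fst t p - snd t p)"
  have bnd: "\<forall>X\<in>S. \<forall>p. \<bar>X p\<bar> \<le> 1" using Sf frob_bound by blast
  have a2: "\<bar>a t p\<bar> \<le> 2" if "t \<in> T" for t p
  proof -
    have "fst t \<in> S" "snd t \<in> S" using that unfolding T_def by auto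
    then have "\<bar>fst t p\<bar> \<le> 1" "\<bar>snd t p\<bar> \<le> 1" using bnd[rule_format] by blast+
    then show ?thesis unfolding a_def by linarith
  qed
  have a0: "a t p = 0" if "t \<in> T" "p \<notin> I" for t p
  proof -
    have "fst t \<in> frob_ball d1 d2" "snd t \<in> frob_ball d1 d2" using that Sf unfolding T_def by auto
    then have "fst t p = 0" "snd t p = 0" using frob_zero that(2) unfolding I_def by blast+
    then show ?thesis unfolding a_def by simp
  qed
  define D where "D = diam_inf d1 d2 S"
  have D_eq: "D = (SUP t\<in>T. Max ((\<lambda>p. \<bar>a t p\<bar>) ` I))"
    unfolding D_def diam_inf_def T_def a_def I_def by (simp add: case_prod_beta)
  have bddM: "bdd_above ((\<lambda>t. Max ((\<lambda>p. \<bar>a t p\<bar>) ` I)) ` T)"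
  proof (rule bdd_aboveI[of _ 2], clarify)
    fix t assume "t \<in> T"
    then show "Max ((\<lambda>p. \<bar>a t p\<bar>) ` I) \<le> 2" using I a2 by (subst Max_le_iff) auto
  qed
  have aDI: "\<bar>a t p\<bar> \<le> D" if "t \<in> T" "p \<in> I" for t p
  proof -
    have "\<bar>a t p\<bar> \<le> Max ((\<lambda>p. \<bar>a t p\<bar>) ` I)" using I that by (intro Max_ge) auto
    also have "\<dots> \<le> D" unfolding D_eq by (rule cSUP_upper[OF that(1) bddM])
    finally show ?thesis .
  qed
  have D0: "D \<ge> 0"
  proof -
    obtain t where "t \<in> T" using T by auto
    moreover obtain p where "p \<in> I" using I by auto
    ultimately show ?thesis using aDI[of t p] by simp
  qed
  have aD: "\<forall>t\<in>T. \<forall>p. \<bar>a t p\<bar> \<le> D"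
  proof (intro ballI allI)
    fix t p assume t: "t \<in> T"
    show "\<bar>a t p\<bar> \<le> D" by (cases "p \<in> I") (use aDI[OF t] a0[OF t] D0 in auto)
  qed
  define \<Omega> where "\<Omega> = PiE {..<m} (\<lambda>_. I)"
  have fO: "finite \<Omega>" unfolding \<Omega>_def using I by (simp add: finite_PiE)
  have neO: "\<Omega> \<noteq> {}" unfolding \<Omega>_def using I by (simp add: PiE_eq_empty_iff)
  define N where "N = real (card \<Omega>)"
  have N0: "N > 0" unfolding N_def using fO neO by (simp add: card_gt_0_iff)
  define E where "E = real (card (signs {..<m::nat}))"
  have E0: "E > 0" unfolding E_def using signs_card_pos[of "{..<m}"] by simp
  define f where "f = (\<lambda>t p. (a t p)\<^sup>2)"
  have fb: "\<forall>t\<in>T. \<forall>p. \<bar>f t p\<bar> \<le> 4"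
  proof (intro ballI allI)
    fix t p assume "t \<in> T"
    then have "\<bar>a t p\<bar>\<^sup>2 \<le> 2\<^sup>2" using a2 by (intro power_mono) auto
    then show "\<bar>f t p\<bar> \<le> 4" unfolding f_def by simp
  qed
  define Iw where "Iw = (\<lambda>\<omega>. integral\<^sup>L (GM {..<m}) (supL T (\<lambda>t k. a t (\<omega> k)) {..<m}))"
  have OP: "Omega_pmf d1 d2 m = pmf_of_set \<Omega>" unfolding Omega_pmf_def \<Omega>_def I_def ..
  have supeq: "(SUP (X, Y)\<in>S \<times> S. \<Sum>k<m. (X (\<omega> k) - Y (\<omega> k))\<^sup>2) = (SUP t\<in>T. \<Sum>k\<in>{..<m}. f t (\<omega> k))" for \<omega>
    unfolding T_def f_def a_def by (simp add: case_prod_beta)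
  have LHS: "measure_pmf.expectation (Omega_pmf d1 d2 m) (\<lambda>\<omega>. SUP (X, Y)\<in>S \<times> S. \<Sum>k<m. (X (\<omega> k) - Y (\<omega> k))\<^sup>2)
      = (\<Sum>\<omega>\<in>\<Omega>. SUP t\<in>T. \<Sum>k\<in>{..<m}. f t (\<omega> k)) / N"
    unfolding OP integral_pmf_of_set[OF neO fO] supeq N_def ..
  have ieq: "integral\<^sup>L (PiM {..<m} (\<lambda>_. GN)) (\<lambda>g. SUP (X, Y)\<in>S \<times> S. \<Sum>k<m. g k * (X (\<omega> k) - Y (\<omega> k))) = Iw \<omega>" for \<omega>
    unfolding Iw_def GM_def supL_def T_def a_def by (simp add: case_prod_beta)
  have WOG: "wOg d1 d2 m S = (\<Sum>\<omega>\<in>\<Omega>. Iw \<omega>) / N"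
    unfolding wOg_def OP integral_pmf_of_set[OF neO fO] ieq N_def ..
  have SYM: "(\<Sum>\<omega>\<in>\<Omega>. SUP t\<in>T. \<Sum>k\<in>{..<m}. f t (\<omega> k))
    \<le> N * (real m * (SUP t\<in>T. (\<Sum>p\<in>I. f t p) / real (card I)))
      + (2 / E) * (\<Sum>\<omega>\<in>\<Omega>. \<Sum>e\<in>signs {..<m}. SUP t\<in>T. \<Sum>k\<in>{..<m}. e k * f t (\<omega> k))"
    using symmetrization[OF finite_lessThan I T fb] unfolding N_def E_def \<Omega>_def by simp
  have OB: "(\<Sum>e\<in>signs {..<m}. SUP t\<in>T. \<Sum>k\<in>{..<m}. e k * f t (\<omega> k)) \<le> 2 * D * (E / cG * Iw \<omega>)" for \<omega>
  proof -
    have bD: "\<forall>t\<in>T. \<forall>k. \<bar>(\<lambda>t k. a t (\<omega> k)) t k\<bar> \<le> D"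
    proof (intro ballI allI)
      fix t k assume t: "t \<in> T"
      show "\<bar>(\<lambda>t k. a t (\<omega> k)) t k\<bar> \<le> D" using aD[rule_format, OF t, of "\<omega> k"] by simp
    qed
    show ?thesis using omega_bound[OF T bD D0, of m] unfolding f_def E_def Iw_def by simp
  qed
  have OB2: "(\<Sum>\<omega>\<in>\<Omega>. \<Sum>e\<in>signs {..<m}. SUP t\<in>T. \<Sum>k\<in>{..<m}. e k * f t (\<omega> k))
      \<le> 2 * D * (E / cG) * (\<Sum>\<omega>\<in>\<Omega>. Iw \<omega>)"
  proof -
    have "(\<Sum>\<omega>\<in>\<Omega>. \<Sum>e\<in>signs {..<m}. SUP t\<in>T. \<Sum>k\<in>{..<m}. e k * f t (\<omega> k)) \<le> (\<Sum>\<omega>\<in>\<Omega>. 2 * D * (E / cG * Iw \<omega>))"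
      by (rule sum_mono) (rule OB)
    also have "\<dots> = 2 * D * (E / cG) * (\<Sum>\<omega>\<in>\<Omega>. Iw \<omega>)" by (simp add: sum_distrib_left mult.assoc)
    finally show ?thesis .
  qed
  define W where "W = wG d1 d2 S"
  define K3 where "K3 = 324 / (25 * cG\<^sup>2)"
  have cG0: "cG > 0" by (rule cG_pos)
  have MU: "(SUP t\<in>T. (\<Sum>p\<in>I. f t p) / real (card I)) \<le> K3 * W\<^sup>2 / (real d1 * real d2)"
  proof (rule cSUP_least[OF T])
    fix t assume t: "t \<in> T"
    have "fst t \<in> S" "snd t \<in> S" using t unfolding T_def by auto
    from wG_lower[OF this bnd, of d1 d2]
    have w: "5/9 * cG * sqrt (\<Sum>p\<in>I. (a t p)\<^sup>2) \<le> 2 * W" unfolding a_def I_def W_def by simp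
    have sq0: "0 \<le> 5/9 * cG * sqrt (\<Sum>p\<in>I. (a t p)\<^sup>2)" using cG0 by (simp add: sum_nonneg)
    have "(5/9 * cG * sqrt (\<Sum>p\<in>I. (a t p)\<^sup>2))\<^sup>2 \<le> (2 * W)\<^sup>2"
      by (rule power_mono[OF w sq0])
    moreover have "(5/9 * cG * sqrt (\<Sum>p\<in>I. (a t p)\<^sup>2))\<^sup>2 = (5/9 * cG)\<^sup>2 * (\<Sum>p\<in>I. (a t p)\<^sup>2)"
      unfolding power_mult_distrib by (simp add: sum_nonneg)
    ultimately have "(5/9 * cG)\<^sup>2 * (\<Sum>p\<in>I. (a t p)\<^sup>2) \<le> 4 * W\<^sup>2"
      by (simp add: power_mult_distrib)
    then have "(\<Sum>p\<in>I. (a t p)\<^sup>2) \<le> K3 * W\<^sup>2"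
      unfolding K3_def using cG0 by (simp add: field_simps power2_eq_square)
    then show "(\<Sum>p\<in>I. f t p) / real (card I) \<le> K3 * W\<^sup>2 / (real d1 * real d2)"
      unfolding f_def cI using d1 d2 by (simp add: divide_right_mono)
  qed
  have "(\<Sum>\<omega>\<in>\<Omega>. SUP t\<in>T. \<Sum>k\<in>{..<m}. f t (\<omega> k))
     \<le> N * (real m * (K3 * W\<^sup>2 / (real d1 * real d2))) + (2 / E) * (2 * D * (E / cG) * (\<Sum>\<omega>\<in>\<Omega>. Iw \<omega>))"
  proof -
    have "N * (real m * (SUP t\<in>T. (\<Sum>p\<in>I. f t p) / real (card I))) \<le> N * (real m * (K3 * W\<^sup>2 / (real d1 * real d2)))"
      using MU N0 by (intro mult_left_mono) auto
    moreover have "(2 / E) * (\<Sum>\<omega>\<in>\<Omega>. \<Sum>e\<in>signs {..<m}. SUP t\<in>T. \<Sum>k\<in>{..<m}. e k * f t (\<omega> k))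
        \<le> (2 / E) * (2 * D * (E / cG) * (\<Sum>\<omega>\<in>\<Omega>. Iw \<omega>))"
      using OB2 E0 by (intro mult_left_mono) auto
    ultimately show ?thesis using SYM by linarith
  qed
  also have "\<dots> = N * (K3 * (real m / (real d1 * real d2)) * W\<^sup>2 + (4 / cG) * D * ((\<Sum>\<omega>\<in>\<Omega>. Iw \<omega>) / N))"
    using E0 N0 cG0 by (simp add: field_simps)
  finally have "(\<Sum>\<omega>\<in>\<Omega>. SUP t\<in>T. \<Sum>k\<in>{..<m}. f t (\<omega> k)) / N
      \<le> K3 * (real m / (real d1 * real d2)) * W\<^sup>2 + (4 / cG) * D * ((\<Sum>\<omega>\<in>\<Omega>. Iw \<omega>) / N)"
    using N0 by (simp add: field_simps)
  then show ?thesis unfolding LHS WOG[symmetric] K3_def W_def D_def .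
qed

theorem lemma4:
  shows "\<exists>k3 k4 :: real. \<forall>d1 d2 m :: nat. \<forall>S :: (nat \<times> nat \<Rightarrow> real) set.
    0 < d1 \<longrightarrow> 0 < d2 \<longrightarrow> compact S \<longrightarrow> S \<subseteq> frob_ball d1 d2 \<longrightarrow>
    has_nonempty_interior d1 d2 S \<longrightarrow>
    measure_pmf.expectation (Omega_pmf d1 d2 m)
       (\<lambda>\<omega>. SUP (X, Y)\<in>S \<times> S. \<Sum>k<m. (X (\<omega> k) - Y (\<omega> k))\<^sup>2)
    \<le> k3 * (real m / (real d1 * real d2)) * (wG d1 d2 S)\<^sup>2
       + k4 * diam_inf d1 d2 S * wOg d1 d2 m S"
proof (intro exI allI impI)
  fix d1 d2 m :: nat and S :: "(nat \<times> nat \<Rightarrow> real) set"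
  assume d1: "0 < d1" and d2: "0 < d2" and "compact S" and Sf: "S \<subseteq> frob_ball d1 d2"
    and int: "has_nonempty_interior d1 d2 S"
  have Sne: "S \<noteq> {}" using int unfolding has_nonempty_interior_def by auto
  show "measure_pmf.expectation (Omega_pmf d1 d2 m)
       (\<lambda>\<omega>. SUP (X, Y)\<in>S \<times> S. \<Sum>k<m. (X (\<omega> k) - Y (\<omega> k))\<^sup>2)
    \<le> (324 / (25 * cG\<^sup>2)) * (real m / (real d1 * real d2)) * (wG d1 d2 S)\<^sup>2
       + (4 / cG) * diam_inf d1 d2 S * wOg d1 d2 m S"
    by (rule main_bound[OF d1 d2 Sf Sne])
qed

end
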